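(* Let $\mu,\nu$ be arbitrary macro states. There is a function $w_{\mu\nu}:\mathbb{R}\to[0,1]$ (one may take $w_{\mu\nu}(t)=\frac{1}{d_\mu}\operatorname{tr}\bigl[P_\mu e^{iHt}P_\nu e^{-iHt}\bigr]$) such that: (i) for every $t\in\mathbb{R}$ and every $\varepsilon>0$, for $(1-\varepsilon)$-most $\psi_0\in\mathbb{S}(\mathcal{H}_\mu)$, $$\Bigl|\|P_\nu\psi_t\|^2-w_{\mu\nu}(t)\Bigr|\le \frac{1}{\sqrt{\varepsilon d_\mu}};$$ (ii) for every $T>0$ and every $\varepsilon>0$, for $(1-\varepsilon)$-most $\psi_0\in\mathbb{S}(\mathcal{H}_\mu)$, $$\frac1T\int_0^T\Bigl|\|P_\nu\psi_t\|^2-w_{\mu\nu}(t)\Bigr|^2\,dt\le\frac{1}{\varepsilon d_\mu}.$$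
   Context: $\mathcal{H}$ is a finite-dimensional complex Hilbert space of dimension $D$ with an orthogonal decomposition $\mathcal{H}=\bigoplus_\nu\mathcal{H}_\nu$ into nonzero subspaces ("macro spaces", indexed by "macro states" $\nu$); $P_\nu$ is the orthogonal projection onto $\mathcal{H}_\nu$ and $d_\nu=\dim\mathcal{H}_\nu$. $H$ is a self-adjoint operator (Hamiltonian) on $\mathcal{H}$ and $\psi_t=e^{-iHt}\psi_0$. $\mathbb{S}(\mathcal{H}_\mu)$ is the unit sphere of $\mathcal{H}_\mu$ and $u_\mu$ the normalized uniform (rotation-invariant) probability measure on it. A statement $s(\psi)$ holds for "$(1-\varepsilon)$-most $\psi\in\mathbb{S}(\mathcal{H}_\mu)$" if $u_\mu(\{\psi: s(\psi)\})\ge1-\varepsilon$. *)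

theory Defs
  imports "HOL-Analysis.Analysis" "HOL-Probability.Probability"
begin

text \<open>The Hilbert space is \<open>complex^'n\<close> (dimension D = CARD('n)), with the standard
  inner product; its norm is the library norm on \<open>complex^'n\<close>.\<close>

definition cadj :: "complex^'n^'n \<Rightarrow> complex^'n^'n" where
  "cadj A = (\<chi> i j. cnj (A $ j $ i))"

definition self_adjoint :: "complex^'n^'n \<Rightarrow> bool" where
  "self_adjoint A \<longleftrightarrow> cadj A = A"

definition unitary :: "complex^'n^'n \<Rightarrow> bool" where
  "unitary U \<longleftrightarrow> cadj U ** U = mat 1"

fun matpow :: "complex^'n^'n \<Rightarrow> nat \<Rightarrow> complex^'n^'n" where
  "matpow A 0 = mat 1"
| "matpow A (Suc k) = A ** matpow A k"

definition cexpm :: "complex \<Rightarrow> complex^'n^'n \<Rightarrow> complex^'n^'n" where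
  "cexpm z A = (\<chi> i j. (\<Sum>k. (z ^ k / of_nat (fact k)) * (matpow A k $ i $ j)))"

definition evol :: "complex^'n^'n \<Rightarrow> real \<Rightarrow> complex^'n \<Rightarrow> complex^'n" where
  "evol H t \<psi>0 = cexpm (- \<i> * of_real t) H *v \<psi>0"

definition macro_decomposition :: "'m set \<Rightarrow> ('m \<Rightarrow> complex^'n^'n) \<Rightarrow> bool" where
  "macro_decomposition Ms P \<longleftrightarrow>
     finite Ms \<and>
     (\<forall>\<nu>\<in>Ms. P \<nu> ** P \<nu> = P \<nu> \<and> cadj (P \<nu>) = P \<nu> \<and> P \<nu> \<noteq> 0) \<and>
     (\<forall>\<nu>\<in>Ms. \<forall>\<nu>'\<in>Ms. \<nu> \<noteq> \<nu>' \<longrightarrow> P \<nu> ** P \<nu>' = 0) \<and>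
     (\<Sum>\<nu>\<in>Ms. P \<nu>) = mat 1"

definition subsp :: "complex^'n^'n \<Rightarrow> (complex^'n) set" where
  "subsp P = range (\<lambda>x. P *v x)"

definition cdim :: "(complex^'n) set \<Rightarrow> nat" where
  "cdim S = vec.dim S"

definition unit_sphere_of :: "(complex^'n) set \<Rightarrow> (complex^'n) set" where
  "unit_sphere_of S = {\<psi> \<in> S. norm \<psi> = 1}"

text \<open>\<open>u\<close> is the normalized uniform (rotation-invariant) probability measure on the unit
  sphere of the subspace \<open>S\<close>: a Borel probability measure on that sphere invariant under
  every unitary of the whole space that maps \<open>S\<close> into itself (these restrict to exactly
  the unitaries of \<open>S\<close>). Such a measure is unique.\<close>
definition uniform_sphere_measure :: "(complex^'n) set \<Rightarrow> (complex^'n) measure \<Rightarrow> bool" where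
  "uniform_sphere_measure S u \<longleftrightarrow>
     prob_space u \<and>
     space u = unit_sphere_of S \<and>
     sets u = sets (restrict_space borel (unit_sphere_of S)) \<and>
     (\<forall>U. unitary U \<and> (\<forall>x\<in>S. U *v x \<in> S) \<longrightarrow> distr u u (\<lambda>x. U *v x) = u)"

definition most :: "(complex^'n) measure \<Rightarrow> real \<Rightarrow> (complex^'n \<Rightarrow> bool) \<Rightarrow> bool" where
  "most u \<epsilon> s \<longleftrightarrow> {\<psi> \<in> space u. s \<psi>} \<in> sets u \<and> measure u {\<psi> \<in> space u. s \<psi>} \<ge> 1 - \<epsilon>"

definition wfun :: "complex^'n^'n \<Rightarrow> complex^'n^'n \<Rightarrow> complex^'n^'n \<Rightarrow> real \<Rightarrow> real" where
  "wfun H P\<mu> P\<nu> t = Re (trace (P\<mu> ** cexpm (\<i> * of_real t) H ** P\<nu> ** cexpm (- \<i> * of_real t) H))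
                        / real (cdim (subsp P\<mu>))"

end

theory Submission
  imports Defs
begin


definition cinner :: "complex^'n \<Rightarrow> complex^'n \<Rightarrow> complex" where
  "cinner x y = (\<Sum>i\<in>UNIV. cnj (x$i) * y$i)"

lemma cinner_adj: "cinner x (A *v y) = cinner (cadj A *v x) y"
proof -
  have "cinner x (A *v y) = (\<Sum>i\<in>UNIV. \<Sum>j\<in>UNIV. cnj (x$i) * A$i$j * y$j)"
    unfolding cinner_def matrix_vector_mult_def by (simp add: sum_distrib_left mult_ac)
  also have "\<dots> = (\<Sum>j\<in>UNIV. \<Sum>i\<in>UNIV. cnj (x$i) * A$i$j * y$j)"
    by (rule sum.swap)
  also have "\<dots> = cinner (cadj A *v x) y"
    unfolding cinner_def matrix_vector_mult_def cadj_def by (simp add: sum_distrib_right sum_distrib_left mult_ac)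
  finally show ?thesis .
qed

lemma cinner_add_right: "cinner x (y + z) = cinner x y + cinner x z"
  unfolding cinner_def by (simp add: distrib_left sum.distrib)
lemma cinner_add_left: "cinner (x + y) z = cinner x z + cinner y z"
  unfolding cinner_def by (simp add: distrib_right sum.distrib)
lemma cinner_diff_right: "cinner x (y - z) = cinner x y - cinner x z"
  unfolding cinner_def by (simp add: right_diff_distrib sum_subtractf)
lemma cinner_diff_left: "cinner (x - y) z = cinner x z - cinner y z"
  unfolding cinner_def by (simp add: left_diff_distrib sum_subtractf)
lemma cinner_scale_right: "cinner x (c *s y) = c * cinner x y"
  unfolding cinner_def by (simp add: sum_distrib_left mult_ac)
lemma cinner_scale_left: "cinner (c *s x) y = cnj c * cinner x y"
  unfolding cinner_def by (simp add: sum_distrib_left mult_ac)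
lemma cinner_sum_right: "cinner x (\<Sum>k\<in>K. f k) = (\<Sum>k\<in>K. cinner x (f k))"
  unfolding cinner_def by (simp add: sum_distrib_left sum.swap[of _ UNIV K])
lemma cinner_sum_left: "cinner (\<Sum>k\<in>K. f k) y = (\<Sum>k\<in>K. cinner (f k) y)"
  unfolding cinner_def by (simp add: sum_distrib_right sum.swap[of _ UNIV K])
lemma cinner_zero_left[simp]: "cinner 0 y = 0" unfolding cinner_def by simp
lemma cinner_zero_right[simp]: "cinner x 0 = 0" unfolding cinner_def by simp
lemma cinner_cnj: "cnj (cinner x y) = cinner y x"
  unfolding cinner_def by (simp add: mult_ac)

lemma norm_vec_sq: "(norm (x::complex^'n))^2 = (\<Sum>i\<in>UNIV. (cmod (x$i))^2)"
  unfolding norm_vec_def L2_set_def by (simp add: sum_nonneg)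

lemma cinner_self: "cinner x x = of_real ((norm x)^2)"
  unfolding cinner_def norm_vec_sq of_real_sum
  by (intro sum.cong refl) (metis complex_norm_square mult.commute of_real_power)

lemma cinner_self_Re: "Re (cinner x x) = (norm x)^2"
  by (simp add: cinner_self)

lemma cadj_mult: "cadj (A ** B) = cadj B ** cadj A"
  unfolding cadj_def matrix_matrix_mult_def
  by (simp add: vec_eq_iff mult_ac)
lemma cadj_cadj[simp]: "cadj (cadj A) = A"
  unfolding cadj_def by (simp add: vec_eq_iff)
lemma cadj_one[simp]: "cadj (mat 1) = mat 1"
  unfolding cadj_def mat_def by (simp add: vec_eq_iff)


lemma matpow_add: "matpow A (k + l) = matpow A k ** matpow A l"
  by (induction k) (simp_all add: matrix_mul_lid matrix_mul_assoc)

lemma matpow_comm: "A ** matpow A k = matpow A k ** A"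
  using matpow_add[of A k 1] matpow_add[of A 1 k] by (simp add: matrix_mul_rid add.commute)

definition mbound :: "complex^'n^'n \<Rightarrow> real" where
  "mbound A = 1 + (\<Sum>i\<in>UNIV. \<Sum>j\<in>UNIV. norm (A$i$j))"

lemma mbound_row: "(\<Sum>m\<in>UNIV. norm (A$i$m)) \<le> mbound A"
proof -
  have "(\<Sum>m\<in>UNIV. norm (A$i$m)) \<le> (\<Sum>i\<in>UNIV. \<Sum>j\<in>UNIV. norm (A$i$j))"
    by (rule member_le_sum[of i UNIV "\<lambda>i. \<Sum>j\<in>UNIV. norm (A$i$j)"]) (auto intro: sum_nonneg)
  then show ?thesis unfolding mbound_def by simp
qed

lemma mbound_pos: "0 < mbound A"
  unfolding mbound_def by (smt (verit) norm_ge_zero sum_nonneg)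

lemma matpow_bound: "norm (matpow A k $ i $ j) \<le> mbound A ^ k"
proof (induction k arbitrary: i j)
  case 0
  then show ?case by (simp add: mat_def)
next
  case (Suc k)
  have "norm (matpow A (Suc k) $ i $ j) = norm (\<Sum>m\<in>UNIV. A$i$m * matpow A k $ m $ j)"
    by (simp add: matrix_matrix_mult_def)
  also have "\<dots> \<le> (\<Sum>m\<in>UNIV. norm (A$i$m) * mbound A ^ k)"
    by (rule order_trans[OF norm_sum sum_mono]) (simp add: norm_mult Suc mult_left_mono)
  also have "\<dots> = (\<Sum>m\<in>UNIV. norm (A$i$m)) * mbound A ^ k"
    by (simp add: sum_distrib_right)
  also have "\<dots> \<le> mbound A * mbound A ^ k"
    by (rule mult_right_mono[OF mbound_row]) (use mbound_pos[of A] in simp)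
  finally show ?case by simp
qed

lemma cexpm_term_bound:
  "norm (z ^ k / of_nat (fact k) * (matpow A k $ i $ j)) \<le> inverse (fact k) * (norm z * mbound A) ^ k"
proof -
  have "norm (z ^ k / of_nat (fact k) * (matpow A k $ i $ j)) = norm z ^ k / fact k * norm (matpow A k $ i $ j)"
    by (simp add: norm_mult norm_divide norm_power)
  also have "\<dots> \<le> norm z ^ k / fact k * mbound A ^ k"
    by (rule mult_left_mono[OF matpow_bound]) simp
  finally show ?thesis by (simp add: power_mult_distrib divide_inverse mult_ac)
qed

lemma cexpm_summable_norm:
  "summable (\<lambda>k. norm (z ^ k / of_nat (fact k) * (matpow A k $ i $ j)))"
  apply (rule summable_comparison_test[OF _ summable_exp[of "norm z * mbound A"]])
  apply (intro exI[of _ 0] allI impI)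
  apply (simp only: real_norm_def abs_norm_cancel cexpm_term_bound)
  done

lemma cexpm_summable:
  "summable (\<lambda>k. z ^ k / of_nat (fact k) * (matpow A k $ i $ j))"
  using summable_norm_cancel[OF cexpm_summable_norm] .

lemma cexpm_entry: "cexpm z A $ i $ j = (\<Sum>k. z ^ k / of_nat (fact k) * (matpow A k $ i $ j))"
  unfolding cexpm_def by simp

lemma cexpm_zero: "cexpm 0 A = mat 1"
proof -
  have "cexpm 0 A $ i $ j = mat 1 $ i $ j" for i j
  proof -
    have "cexpm 0 A $ i $ j = (\<Sum>k. (matpow A k $ i $ j / of_nat (fact k)) * 0 ^ k)"
      unfolding cexpm_entry by (intro suminf_cong) (simp add: mult_ac)
    also have "\<dots> = mat 1 $ i $ j" by (subst powser_zero) simp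
    finally show ?thesis .
  qed
  then show ?thesis by (simp add: vec_eq_iff)
qed

lemma binom_sum_fact:
  fixes z w :: complex
  shows "(\<Sum>k\<le>n. z ^ k / of_nat (fact k) * (w ^ (n - k) / of_nat (fact (n - k))))
        = (z + w) ^ n / of_nat (fact n)"
proof -
  have "(z + w) ^ n = (\<Sum>k\<le>n. of_nat (n choose k) * z ^ k * w ^ (n - k))"
    by (rule binomial_ring)
  also have "\<dots> = (\<Sum>k\<le>n. of_nat (fact n) * (z ^ k / of_nat (fact k) * (w ^ (n - k) / of_nat (fact (n - k)))))"
  proof (intro sum.cong refl)
    fix k assume "k \<in> {..n}"
    then have kn: "k \<le> n" by simp
    have "(of_nat (n choose k) :: complex) = of_nat (fact n) / (of_nat (fact k) * of_nat (fact (n - k)))"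
      using binomial_fact[OF kn] by simp
    then show "of_nat (n choose k) * z ^ k * w ^ (n - k) =
      of_nat (fact n) * (z ^ k / of_nat (fact k) * (w ^ (n - k) / of_nat (fact (n - k))))"
      by (simp add: field_simps)
  qed
  also have "\<dots> = of_nat (fact n) * (\<Sum>k\<le>n. z ^ k / of_nat (fact k) * (w ^ (n - k) / of_nat (fact (n - k))))"
    by (simp add: sum_distrib_left)
  finally show ?thesis by (simp add: field_simps)
qed

lemma cexpm_add: "cexpm z A ** cexpm w A = cexpm (z + w) A"
proof -
  have "(cexpm z A ** cexpm w A) $ i $ j = cexpm (z + w) A $ i $ j" for i j
  proof -
    define a where "a = (\<lambda>m k. z ^ k / of_nat (fact k) * (matpow A k $ i $ m))"
    define b where "b = (\<lambda>m k. w ^ k / of_nat (fact k) * (matpow A k $ m $ j))"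
    have "(cexpm z A ** cexpm w A) $ i $ j = (\<Sum>m\<in>UNIV. (\<Sum>k. a m k) * (\<Sum>k. b m k))"
      by (simp add: matrix_matrix_mult_def cexpm_entry a_def b_def)
    also have "\<dots> = (\<Sum>m\<in>UNIV. \<Sum>n. \<Sum>k\<le>n. a m k * b m (n - k))"
      unfolding a_def b_def by (intro sum.cong refl Cauchy_product cexpm_summable_norm)
    also have "\<dots> = (\<Sum>n. \<Sum>m\<in>UNIV. \<Sum>k\<le>n. a m k * b m (n - k))"
      by (rule suminf_sum[symmetric]) 
         (unfold a_def b_def, intro summable_Cauchy_product cexpm_summable_norm)
    also have "\<dots> = (\<Sum>n. (z + w) ^ n / of_nat (fact n) * (matpow A n $ i $ j))"
    proof (intro suminf_cong)
      fix n
      have "(\<Sum>m\<in>UNIV. \<Sum>k\<le>n. a m k * b m (n - k))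
          = (\<Sum>k\<le>n. (z ^ k / of_nat (fact k) * (w ^ (n - k) / of_nat (fact (n - k)))) *
                (\<Sum>m\<in>UNIV. matpow A k $ i $ m * matpow A (n - k) $ m $ j))"
        by (subst sum.swap) (simp add: a_def b_def sum_distrib_left mult_ac)
      also have "\<dots> = (\<Sum>k\<le>n. (z ^ k / of_nat (fact k) * (w ^ (n - k) / of_nat (fact (n - k))))) *
                (matpow A n $ i $ j)"
      proof -
        have "(\<Sum>m\<in>UNIV. matpow A k $ i $ m * matpow A (n - k) $ m $ j) = matpow A n $ i $ j"
          if "k \<le> n" for k
          using matpow_add[of A k "n - k"] that by (simp add: matrix_matrix_mult_def)
        then show ?thesis by (simp add: sum_distrib_right)
      qed
      also have "\<dots> = (z + w) ^ n / of_nat (fact n) * (matpow A n $ i $ j)"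
        by (simp only: binom_sum_fact)
      finally show "(\<Sum>m\<in>UNIV. \<Sum>k\<le>n. a m k * b m (n - k)) = (z + w) ^ n / of_nat (fact n) * (matpow A n $ i $ j)" .
    qed
    also have "\<dots> = cexpm (z + w) A $ i $ j" by (simp add: cexpm_entry)
    finally show ?thesis .
  qed
  then show ?thesis by (simp add: vec_eq_iff)
qed

lemma cexpm_inv: "cexpm z A ** cexpm (- z) A = mat 1"
  using cexpm_add[of z A "-z"] by (simp add: cexpm_zero)

lemma cadj_matpow_sa: assumes "cadj A = A" shows "cadj (matpow A k) = matpow A k"
proof (induction k)
  case 0 then show ?case by simp
next
  case (Suc k)
  have "cadj (matpow A (Suc k)) = matpow A k ** A" using Suc assms by (simp add: cadj_mult)
  then show ?case by (simp add: matpow_comm)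
qed

lemma cadj_cexpm: assumes "self_adjoint A" shows "cadj (cexpm z A) = cexpm (cnj z) A"
proof -
  have sa: "cadj A = A" using assms unfolding self_adjoint_def .
  have "cadj (cexpm z A) $ i $ j = cexpm (cnj z) A $ i $ j" for i j
  proof -
    have "cadj (cexpm z A) $ i $ j = cnj (\<Sum>k. z ^ k / of_nat (fact k) * (matpow A k $ j $ i))"
      by (simp add: cadj_def cexpm_entry)
    also have "\<dots> = (\<Sum>k. cnj (z ^ k / of_nat (fact k) * (matpow A k $ j $ i)))"
      by (rule sums_unique[OF sums_cnj[THEN iffD2, OF summable_sums[OF cexpm_summable]]])
    also have "\<dots> = (\<Sum>k. cnj z ^ k / of_nat (fact k) * (matpow A k $ i $ j))"
    proof (intro suminf_cong)
      fix k
      have "cnj (matpow A k $ j $ i) = matpow A k $ i $ j"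
        using arg_cong[OF cadj_matpow_sa[OF sa, of k], of "\<lambda>B. B $ i $ j"] by (simp add: cadj_def)
      then show "cnj (z ^ k / of_nat (fact k) * (matpow A k $ j $ i)) = cnj z ^ k / of_nat (fact k) * (matpow A k $ i $ j)"
        by simp
    qed
    finally show ?thesis by (simp add: cexpm_entry)
  qed
  then show ?thesis by (simp add: vec_eq_iff)
qed

lemma isCont_cexpm_entry: "isCont (\<lambda>z. cexpm z A $ i $ j) z"
proof -
  have eq: "(\<lambda>z. cexpm z A $ i $ j) = (\<lambda>z. \<Sum>k. (matpow A k $ i $ j / of_nat (fact k)) * z ^ k)"
    by (rule ext) (simp add: cexpm_entry mult_ac)
  show ?thesis unfolding eq
  proof (rule isCont_powser_converges_everywhere)
    fix y :: complex
    have "(\<lambda>n. (matpow A n $ i $ j / of_nat (fact n)) * y ^ n) = (\<lambda>k. y ^ k / of_nat (fact k) * (matpow A k $ i $ j))"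
      by (rule ext) (simp add: field_simps)
    then show "summable (\<lambda>n. (matpow A n $ i $ j / of_nat (fact n)) * y ^ n)"
      using cexpm_summable[of y A i j] by simp
  qed
qed

lemma continuous_cexpm_entry: "continuous_on S (\<lambda>t::real. cexpm (c * of_real t) A $ i $ j)"
proof -
  have 1: "continuous_on S (\<lambda>t::real. c * of_real t)" by (intro continuous_intros)
  have 2: "continuous_on ((\<lambda>t::real. c * of_real t) ` S) (\<lambda>z. cexpm z A $ i $ j)"
    by (intro continuous_at_imp_continuous_on ballI isCont_cexpm_entry)
  show ?thesis using continuous_on_compose[OF 1 2] by (simp add: o_def)
qed


definition ON :: "(nat \<Rightarrow> complex^'n) \<Rightarrow> nat \<Rightarrow> bool" where
  "ON e m \<longleftrightarrow> (\<forall>k<m. \<forall>l<m. cinner (e k) (e l) = (if k = l then 1 else 0))"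

lemma cinner_self_eq_0: "cinner x x = 0 \<longleftrightarrow> x = 0"
  by (simp add: cinner_self)

lemma ON_inj: assumes "ON e m" shows "inj_on e {..<m}"
proof (rule inj_onI)
  fix k l assume "k \<in> {..<m}" "l \<in> {..<m}" "e k = e l"
  then show "k = l" using assms unfolding ON_def
    by (metis (no_types, lifting) lessThan_iff one_neq_zero)
qed

lemma ON_expand_coeff:
  assumes "ON e m" "j < m"
  shows "cinner (e j) (\<Sum>k<m. c k *s e k) = c j"
proof -
  have "cinner (e j) (\<Sum>k<m. c k *s e k) = (\<Sum>k<m. c k * (if j = k then 1 else 0))"
    using assms unfolding ON_def by (simp add: cinner_sum_right cinner_scale_right)
  also have "\<dots> = (\<Sum>k<m. if j = k then c k else 0)" by (intro sum.cong) auto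
  also have "\<dots> = c j" using assms(2) by (simp add: sum.delta)
  finally show ?thesis .
qed

lemma ON_independent:
  assumes "ON e m" shows "vec.independent (e ` {..<m})"
proof
  assume dep: "vec.dependent (e ` {..<m})"
  obtain u where u: "\<exists>v\<in>e ` {..<m}. u v \<noteq> 0" "(\<Sum>v\<in>e ` {..<m}. u v *s v) = 0"
    using vec.dependent_finite[THEN iffD1, OF _ dep] by auto
  have "(\<Sum>k<m. u (e k) *s e k) = 0"
    using u(2) sum.reindex[OF ON_inj[OF assms], of "\<lambda>v. u v *s v"] by simp
  then have "u (e j) = 0" if "j < m" for j
    using ON_expand_coeff[OF assms that, of "\<lambda>k. u (e k)"] by simp
  then show False using u(1) by auto
qed

lemma ON_card: assumes "ON e m" shows "card (e ` {..<m}) = m"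
  using card_image[OF ON_inj[OF assms]] by simp

 lemma ON_bound: fixes e :: "nat \<Rightarrow> complex^'n" assumes "ON e m" shows "m \<le> vec.dim (UNIV :: (complex^'n) set)"
  using vec.independent_card_le_dim[of "e ` {..<m}" UNIV] ON_independent[OF assms] ON_card[OF assms]
  by simp

lemma ON_basis_exists:
  fixes S :: "(complex^'n) set"
  assumes sub: "vec.subspace S"
  shows "\<exists>e m. (\<forall>k<m. e k \<in> S) \<and> ON e m \<and> (\<forall>x\<in>S. x = (\<Sum>k<m. cinner (e k) x *s e k))"
proof -
  define G where "G = {m. \<exists>e::nat \<Rightarrow> complex^'n. (\<forall>k<m. e k \<in> S) \<and> ON e m}"
  have G0: "0 \<in> G" unfolding G_def ON_def by auto
  have Gb: "G \<subseteq> {..vec.dim (UNIV :: (complex^'n) set)}"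
    unfolding G_def using ON_bound by auto
  then have finG: "finite G" using finite_subset by blast
  define m where "m = Max G"
  have "m \<in> G" unfolding m_def using G0 finG Max_in by blast
  then obtain e where eS: "\<forall>k<m. e k \<in> S" and eON: "ON e m" unfolding G_def by blast
  have span: "x = (\<Sum>k<m. cinner (e k) x *s e k)" if xS: "x \<in> S" for x
  proof (rule ccontr)
    assume ne: "x \<noteq> (\<Sum>k<m. cinner (e k) x *s e k)"
    define y where "y = x - (\<Sum>k<m. cinner (e k) x *s e k)"
    have y0: "y \<noteq> 0" using ne unfolding y_def by simp
    have yS: "y \<in> S" unfolding y_def
      by (intro vec.subspace_diff[OF sub xS] vec.subspace_sum[OF sub] vec.subspace_scale[OF sub])
         (use eS in auto)
    have yorth: "cinner (e j) y = 0" if "j < m" for j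
      unfolding y_def cinner_diff_right ON_expand_coeff[OF eON that] by simp
    define n where "n = norm y"
    have npos: "n > 0" unfolding n_def using y0 by simp
    define e' where "e' = e(m := of_real (1 / n) *s y)"
    have e'S: "\<forall>k<Suc m. e' k \<in> S"
      unfolding e'_def using eS yS vec.subspace_scale[OF sub yS] by (auto simp: less_Suc_eq)
    have yy: "cinner (of_real (1 / n) *s y) (of_real (1 / n) *s y) = 1"
      unfolding cinner_scale_left cinner_scale_right unfolding cinner_self n_def[symmetric]
      using npos by (simp add: power2_eq_square field_simps)
    have y1: "cinner (e k) (of_real (1 / n) *s y) = 0" if "k < m" for k
      using yorth[OF that] by (simp add: cinner_scale_right)
    have y2: "cinner (of_real (1 / n) *s y) (e k) = 0" if "k < m" for k
      using y1[OF that] cinner_cnj by (metis complex_cnj_zero)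
    have "ON e' (Suc m)"
      unfolding ON_def
    proof (intro allI impI)
      fix k l assume k: "k < Suc m" and l: "l < Suc m"
      show "cinner (e' k) (e' l) = (if k = l then 1 else 0)"
        using k l eON yy y1 y2 unfolding e'_def ON_def
        by (cases "k = m"; cases "l = m") (auto simp: less_Suc_eq)
    qed
    then have "Suc m \<in> G" unfolding G_def using e'S by blast
    then have "Suc m \<le> m" unfolding m_def using finG by (simp add: Max_ge)
    then show False by simp
  qed
  show ?thesis using eS eON span by blast
qed

lemma ON_dim:
  assumes "vec.subspace S" "\<forall>k<m. e k \<in> S" "ON e m" "\<forall>x\<in>S. x = (\<Sum>k<m. cinner (e k) x *s e k)"
  shows "vec.dim S = m"
proof (rule vec.dim_unique[of "e ` {..<m}"])
  show "e ` {..<m} \<subseteq> S" using assms(2) by auto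
  show "S \<subseteq> vec.span (e ` {..<m})"
  proof
    fix x assume "x \<in> S"
    then have "x = (\<Sum>k<m. cinner (e k) x *s e k)" using assms(4) by auto
    also have "\<dots> \<in> vec.span (e ` {..<m})"
      by (intro vec.span_sum vec.span_scale vec.span_base) auto
    finally show "x \<in> vec.span (e ` {..<m})" .
  qed
  show "vec.independent (e ` {..<m})" by (rule ON_independent[OF assms(3)])
  show "card (e ` {..<m}) = m" by (rule ON_card[OF assms(3)])
qed


lemma mv_sum: fixes A :: "complex^'n^'m" shows "A *v (\<Sum>k\<in>K. f k) = (\<Sum>k\<in>K. A *v f k)"
  by (rule Cartesian_Space.vec.sum)
lemma mv_scale: fixes A :: "complex^'n^'m" shows "A *v (c *s x) = c *s (A *v x)"
  by (rule vector_scalar_commute)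
lemma mv_diff: fixes A :: "complex^'n^'m" shows "A *v (x - y) = A *v x - A *v y"
  by (rule matrix_vector_mult_diff_distrib)

locale projection =
  fixes P :: "complex^'n^'n"
  assumes idem: "P ** P = P" and sa: "cadj P = P"
begin

lemma PP: "P *v (P *v x) = P *v x"
  by (metis idem matrix_vector_mul_assoc)

lemma cinner_P: "cinner (P *v x) y = cinner x (P *v y)"
  by (metis cinner_adj sa)

lemma norm_P_sq: "(norm x)^2 = (norm (P *v x))^2 + (norm (x - P *v x))^2"
proof -
  have orth: "cinner (P *v x) (x - P *v x) = 0"
    by (simp add: cinner_P mv_diff PP)
  have orth2: "cinner (x - P *v x) (P *v x) = 0"
    using orth cinner_cnj by (metis complex_cnj_zero)
  have "cinner x x = cinner (P *v x + (x - P *v x)) (P *v x + (x - P *v x))" by simp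
  also have "\<dots> = cinner (P *v x) (P *v x) + cinner (x - P *v x) (x - P *v x)"
    unfolding cinner_add_left cinner_add_right orth orth2 by simp
  finally have "complex_of_real ((norm x)^2) = complex_of_real ((norm (P *v x))^2 + (norm (x - P *v x))^2)"
    by (simp add: cinner_self)
  then show ?thesis using of_real_eq_iff by blast
qed

lemma norm_P_le: "norm (P *v x) \<le> norm x"
proof -
  have "(norm (P *v x))^2 \<le> (norm x)^2" using norm_P_sq[of x] by simp
  then show ?thesis by (rule power2_le_imp_le) simp
qed

lemma subsp_iff: "x \<in> subsp P \<longleftrightarrow> P *v x = x"
  unfolding subsp_def using PP by (metis rangeE rangeI)

lemma subspace: "vec.subspace (subsp P)"
  unfolding vec.subspace_def by (auto simp: subsp_iff mv_scale matrix_vector_right_distrib)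

lemma norm_sq_cinner_P: "(norm (P *v x))^2 = Re (cinner x (P *v x))"
  by (metis cinner_P PP cinner_self_Re)

end

locale onb = projection P for P :: "complex^'n^'n" +
  fixes e :: "nat \<Rightarrow> complex^'n" and m :: nat
  assumes eS: "\<And>k. k < m \<Longrightarrow> P *v e k = e k"
    and eON: "ON e m"
    and expand: "\<And>x. P *v x = x \<Longrightarrow> x = (\<Sum>k<m. cinner (e k) x *s e k)"
begin

lemma e_orth: "k < m \<Longrightarrow> l < m \<Longrightarrow> cinner (e k) (e l) = (if k = l then 1 else 0)"
  using eON unfolding ON_def by blast

lemma P_expand: "P *v x = (\<Sum>k<m. cinner (e k) x *s e k)"
proof -
  have "P *v x = (\<Sum>k<m. cinner (e k) (P *v x) *s e k)" using expand PP by blast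
  also have "\<dots> = (\<Sum>k<m. cinner (e k) x *s e k)"
    by (intro sum.cong refl) (metis cinner_P eS lessThan_iff)
  finally show ?thesis .
qed

lemma trace_P: "trace (P ** B) = (\<Sum>k<m. cinner (e k) (B *v e k))"
proof -
  have Pij: "P $ i $ j = (\<Sum>k<m. cnj (e k $ j) * e k $ i)" for i j
  proof -
    have "P $ i $ j = (P *v axis j 1) $ i"
      unfolding matrix_vector_mult_def axis_def by (simp add: if_distrib[of "\<lambda>x. _ * x"] cong: if_cong)
    also have "\<dots> = (\<Sum>k<m. cinner (e k) (axis j 1) * e k $ i)"
      unfolding P_expand by (simp add: sum_component)
    also have "\<dots> = (\<Sum>k<m. cnj (e k $ j) * e k $ i)"
      by (simp add: cinner_def axis_def if_distrib sum.delta cong: if_cong)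
    finally show ?thesis .
  qed
  have "trace (P ** B) = (\<Sum>i\<in>UNIV. \<Sum>j\<in>UNIV. P$i$j * B$j$i)"
    by (simp add: trace_def matrix_matrix_mult_def)
  also have "\<dots> = (\<Sum>i\<in>UNIV. \<Sum>j\<in>UNIV. \<Sum>k<m. cnj (e k $ j) * e k $ i * B$j$i)"
    by (simp add: Pij sum_distrib_right)
  also have "\<dots> = (\<Sum>k<m. \<Sum>j\<in>UNIV. \<Sum>i\<in>UNIV. cnj (e k $ j) * e k $ i * B$j$i)"
    by (subst sum.swap, subst (2) sum.swap, subst sum.swap, rule refl)
  also have "\<dots> = (\<Sum>k<m. cinner (e k) (B *v e k))"
    by (simp add: cinner_def matrix_vector_mult_def sum_distrib_left mult_ac)
  finally show ?thesis .
qed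

lemma coord_sq: assumes "P *v x = x"
  shows "(norm x)^2 = (\<Sum>k<m. (cmod (cinner (e k) x))^2)"
proof -
  let ?c = "\<lambda>k. cinner (e k) x"
  have "cinner x x = cinner (\<Sum>k<m. ?c k *s e k) (\<Sum>l<m. ?c l *s e l)"
    using expand[OF assms] by simp
  also have "\<dots> = (\<Sum>k<m. \<Sum>l<m. cnj (?c k) * ?c l * cinner (e k) (e l))"
    apply (simp add: cinner_sum_left cinner_sum_right cinner_scale_left cinner_scale_right sum_distrib_left mult_ac)
    by (rule sum.swap)
  also have "\<dots> = (\<Sum>k<m. cnj (?c k) * ?c k)"
  proof (intro sum.cong refl)
    fix k assume k: "k \<in> {..<m}"
    have "(\<Sum>l<m. cnj (?c k) * ?c l * cinner (e k) (e l)) = (\<Sum>l<m. if k = l then cnj (?c k) * ?c l else 0)"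
      using k by (intro sum.cong refl) (simp add: e_orth)
    then show "(\<Sum>l<m. cnj (?c k) * ?c l * cinner (e k) (e l)) = cnj (?c k) * ?c k"
      using k by (simp add: sum.delta)
  qed
  also have "\<dots> = of_real (\<Sum>k<m. (cmod (?c k))^2)"
    unfolding of_real_sum by (intro sum.cong refl) (metis complex_norm_square mult.commute of_real_power)
  finally show ?thesis unfolding cinner_self using of_real_eq_iff by blast
qed

lemma bessel: "(\<Sum>k<m. (cmod (cinner (e k) y))^2) \<le> (norm y)^2"
proof -
  have "(\<Sum>k<m. (cmod (cinner (e k) y))^2) = (\<Sum>k<m. (cmod (cinner (e k) (P *v y)))^2)"
    by (intro sum.cong refl) (metis cinner_P eS lessThan_iff)
  also have "\<dots> = (norm (P *v y))^2" using coord_sq[of "P *v y"] PP by simp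
  also have "\<dots> \<le> (norm y)^2" using norm_P_le by (simp add: power_mono)
  finally show ?thesis .
qed

lemma quad_expand: assumes "P *v x = x"
  shows "cinner x (B *v x) = (\<Sum>k<m. \<Sum>l<m. cnj (cinner (e k) x) * cinner (e l) x * cinner (e k) (B *v e l))"
proof -
  let ?c = "\<lambda>k. cinner (e k) x"
  have "cinner x (B *v x) = cinner (\<Sum>k<m. ?c k *s e k) (B *v (\<Sum>l<m. ?c l *s e l))"
    using expand[OF assms] by simp
  also have "\<dots> = (\<Sum>k<m. \<Sum>l<m. cnj (?c k) * ?c l * cinner (e k) (B *v e l))"
    apply (simp add: mv_sum mv_scale cinner_sum_left cinner_sum_right cinner_scale_left cinner_scale_right sum_distrib_left mult_ac)
    by (rule sum.swap)
  finally show ?thesis .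
qed

lemma m_pos: assumes "P \<noteq> 0" shows "m > 0"
proof (rule ccontr)
  assume "\<not> m > 0"
  then have "P *v x = 0" for x using P_expand by simp
  then have "P = 0"
    by (metis matrix_vector_mult_0 matrix_vector_mul_assoc matrix_eq)
  then show False using assms by simp
qed

end


lemma cinner_axis: "cinner (axis i 1) z = z $ i"
proof -
  have "cnj (axis i 1 $ ia) * z $ ia = (if ia = i then z $ i else 0)" for ia
    by (simp add: axis_def)
  then show ?thesis unfolding cinner_def by simp
qed

lemma mv_axis: "((M::complex^'n^'n) *v axis j 1) $ i = M $ i $ j"
proof -
  have "M $ i $ k * axis j 1 $ k = (if k = j then M $ i $ j else 0)" for k
    by (simp add: axis_def)
  then show ?thesis unfolding matrix_vector_mult_def by simp
qed

lemma unitary_of_isometry: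
  assumes "\<And>x y. cinner (A *v x) (A *v y) = cinner x y"
  shows "unitary A"
proof -
  have "(cadj A ** A) $ i $ j = mat 1 $ i $ j" for i j
  proof -
    have "cinner (axis i 1) ((cadj A ** A) *v axis j 1) = cinner (axis i 1) (axis j 1)"
      using assms[of "axis i 1" "axis j 1"]
      by (metis cadj_cadj cinner_adj matrix_vector_mul_assoc)
    then have "((cadj A ** A) *v axis j 1) $ i = axis j 1 $ i" by (simp only: cinner_axis)
    then show ?thesis unfolding mv_axis
      by (simp add: mat_def axis_def)
  qed
  then show ?thesis unfolding unitary_def by (simp add: vec_eq_iff)
qed

definition Vunit :: "nat \<Rightarrow> (nat \<Rightarrow> nat \<Rightarrow> complex) \<Rightarrow> bool" where
  "Vunit m V \<longleftrightarrow> (\<forall>k<m. \<forall>l<m. (\<Sum>j<m. cnj (V j k) * V j l) = (if k = l then 1 else 0))"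

context onb
begin

definition Smat :: "(nat \<Rightarrow> nat \<Rightarrow> complex) \<Rightarrow> complex^'n^'n" where
  "Smat V = (\<chi> i j. \<Sum>k<m. \<Sum>l<m. V k l * e k $ i * cnj (e l $ j))"

definition Umat :: "(nat \<Rightarrow> nat \<Rightarrow> complex) \<Rightarrow> complex^'n^'n" where
  "Umat V = mat 1 - P + Smat V"

definition tr :: "(nat \<Rightarrow> nat \<Rightarrow> complex) \<Rightarrow> (complex^'n) \<Rightarrow> nat \<Rightarrow> complex" where
  "tr V x k = (\<Sum>l<m. V k l * cinner (e l) x)"

lemma Smat_mv: "Smat V *v x = (\<Sum>k<m. tr V x k *s e k)"
proof -
  have "(Smat V *v x) $ i = (\<Sum>k<m. tr V x k *s e k) $ i" for i
  proof -
    have "(Smat V *v x) $ i = (\<Sum>j\<in>UNIV. \<Sum>k<m. \<Sum>l<m. V k l * e k $ i * cnj (e l $ j) * x $ j)"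
      by (simp add: Smat_def matrix_vector_mult_def sum_distrib_right)
    also have "\<dots> = (\<Sum>k<m. \<Sum>j\<in>UNIV. \<Sum>l<m. V k l * e k $ i * cnj (e l $ j) * x $ j)"
      by (rule sum.swap)
    also have "\<dots> = (\<Sum>k<m. \<Sum>l<m. \<Sum>j\<in>UNIV. V k l * e k $ i * cnj (e l $ j) * x $ j)"
      by (intro sum.cong refl sum.swap)
    also have "\<dots> = (\<Sum>k<m. tr V x k *s e k) $ i"
      by (simp add: sum_component tr_def cinner_def sum_distrib_left sum_distrib_right mult_ac)
    finally show ?thesis .
  qed
  then show ?thesis by (simp add: vec_eq_iff)
qed

lemma Umat_mv: "Umat V *v x = (x - P *v x) + (\<Sum>k<m. tr V x k *s e k)"
  unfolding Umat_def by (simp add: matrix_vector_mult_add_rdistrib matrix_vector_mult_diff_rdistrib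
      matrix_vector_mul_lid Smat_mv)

lemma orth_part: "k < m \<Longrightarrow> cinner (e k) (x - P *v x) = 0"
  by (simp add: cinner_diff_right flip: cinner_P) (simp add: eS)

lemma decomp: "x = (x - P *v x) + (\<Sum>k<m. cinner (e k) x *s e k)"
  using P_expand[of x] by simp

lemma cinner_ebasis_sum:
  "cinner (\<Sum>k<m. a k *s e k) (\<Sum>k<m. b k *s e k) = (\<Sum>k<m. cnj (a k) * b k)"
proof -
  have "cinner (\<Sum>k<m. a k *s e k) (\<Sum>l<m. b l *s e l) = (\<Sum>k<m. \<Sum>l<m. cnj (a k) * b l * cinner (e k) (e l))"
    apply (simp add: cinner_sum_left cinner_sum_right cinner_scale_left cinner_scale_right sum_distrib_left mult_ac)
    by (rule sum.swap)
  also have "\<dots> = (\<Sum>k<m. cnj (a k) * b k)"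
  proof (intro sum.cong refl)
    fix k assume k: "k \<in> {..<m}"
    have "(\<Sum>l<m. cnj (a k) * b l * cinner (e k) (e l)) = (\<Sum>l<m. if k = l then cnj (a k) * b l else 0)"
      using k by (intro sum.cong refl) (simp add: e_orth)
    then show "(\<Sum>l<m. cnj (a k) * b l * cinner (e k) (e l)) = cnj (a k) * b k"
      using k by (simp add: sum.delta)
  qed
  finally show ?thesis .
qed

lemma cinner_orth_sum:
  assumes "\<And>k. k < m \<Longrightarrow> cinner (e k) z = 0"
  shows "cinner z (\<Sum>k<m. b k *s e k) = 0" "cinner (\<Sum>k<m. b k *s e k) z = 0"
proof -
  have "cinner (e k) z = 0" if "k \<in> {..<m}" for k using assms that by simp
  then have "cinner (\<Sum>k<m. b k *s e k) z = 0"
    by (simp add: cinner_sum_left cinner_scale_left)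
  then show "cinner (\<Sum>k<m. b k *s e k) z = 0" .
  then show "cinner z (\<Sum>k<m. b k *s e k) = 0" using cinner_cnj by (metis complex_cnj_zero)
qed

lemma cinner_split:
  assumes "\<And>k. k < m \<Longrightarrow> cinner (e k) z = 0" "\<And>k. k < m \<Longrightarrow> cinner (e k) z' = 0"
  shows "cinner (z + (\<Sum>k<m. a k *s e k)) (z' + (\<Sum>k<m. b k *s e k)) = cinner z z' + (\<Sum>k<m. cnj (a k) * b k)"
  unfolding cinner_add_left cinner_add_right cinner_ebasis_sum
  using cinner_orth_sum[OF assms(1)] cinner_orth_sum[OF assms(2)] by simp

lemma tr_sum: assumes "Vunit m V"
  shows "(\<Sum>k<m. cnj (tr V x k) * tr V y k) = (\<Sum>k<m. cnj (cinner (e k) x) * cinner (e k) y)"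
proof -
  have "(\<Sum>k<m. cnj (tr V x k) * tr V y k)
     = (\<Sum>k<m. \<Sum>l<m. \<Sum>l'<m. cnj (V k l) * V k l' * (cnj (cinner (e l) x) * cinner (e l') y))"
    by (simp add: tr_def sum_distrib_left sum_distrib_right mult_ac)
  also have "\<dots> = (\<Sum>l<m. \<Sum>k<m. \<Sum>l'<m. cnj (V k l) * V k l' * (cnj (cinner (e l) x) * cinner (e l') y))"
    by (rule sum.swap)
  also have "\<dots> = (\<Sum>l<m. \<Sum>l'<m. \<Sum>k<m. cnj (V k l) * V k l' * (cnj (cinner (e l) x) * cinner (e l') y))"
    by (intro sum.cong refl sum.swap)
  also have "\<dots> = (\<Sum>l<m. \<Sum>l'<m. (if l = l' then 1 else 0) * (cnj (cinner (e l) x) * cinner (e l') y))"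
  proof (intro sum.cong refl)
    fix l l' assume "l \<in> {..<m}" "l' \<in> {..<m}"
    then show "(\<Sum>k<m. cnj (V k l) * V k l' * (cnj (cinner (e l) x) * cinner (e l') y)) =
       (if l = l' then 1 else 0) * (cnj (cinner (e l) x) * cinner (e l') y)"
      using assms unfolding Vunit_def by (simp flip: sum_distrib_right)
  qed
  also have "\<dots> = (\<Sum>k<m. cnj (cinner (e k) x) * cinner (e k) y)"
    by (simp add: if_distrib[of "\<lambda>x. x * _"] sum.delta cong: if_cong)
  finally show ?thesis .
qed

lemma Umat_unitary: assumes "Vunit m V" shows "unitary (Umat V)"
proof (rule unitary_of_isometry)
  fix x y
  have "cinner (Umat V *v x) (Umat V *v y) = cinner (x - P *v x) (y - P *v y) + (\<Sum>k<m. cnj (tr V x k) * tr V y k)"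
    unfolding Umat_mv by (rule cinner_split) (simp_all add: orth_part)
  also have "\<dots> = cinner (x - P *v x) (y - P *v y) + (\<Sum>k<m. cnj (cinner (e k) x) * cinner (e k) y)"
    by (simp add: tr_sum[OF assms])
  also have "\<dots> = cinner ((x - P *v x) + (\<Sum>k<m. cinner (e k) x *s e k)) ((y - P *v y) + (\<Sum>k<m. cinner (e k) y *s e k))"
    by (rule cinner_split[symmetric]) (simp_all add: orth_part)
  also have "\<dots> = cinner x y" using decomp[of x] decomp[of y] by simp
  finally show "cinner (Umat V *v x) (Umat V *v y) = cinner x y" .
qed

lemma Umat_range: assumes "P *v x = x" shows "P *v (Umat V *v x) = Umat V *v x"
proof -
  have "x - P *v x = 0" using assms by simp
  moreover have "P *v (\<Sum>k<m. tr V x k *s e k) = (\<Sum>k<m. tr V x k *s e k)"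
    by (simp add: mv_sum mv_scale eS)
  ultimately show ?thesis unfolding Umat_mv by (simp add: matrix_vector_right_distrib)
qed

lemma Umat_coord: "j < m \<Longrightarrow> cinner (e j) (Umat V *v x) = tr V x j"
  unfolding Umat_mv cinner_add_right orth_part
  using ON_expand_coeff[OF eON] by simp

lemma unitary_norm: assumes "unitary U" shows "norm (U *v x) = norm x"
proof -
  have "cinner (U *v x) (U *v x) = cinner x x"
    using assms unfolding unitary_def
    by (metis cinner_adj matrix_vector_mul_assoc matrix_vector_mul_lid)
  then have "(norm (U *v x))^2 = (norm x)^2" unfolding cinner_self of_real_eq_iff .
  then show ?thesis by (simp add: power2_eq_iff_nonneg)
qed

end


lemma cont_cinner[continuous_intros]: "continuous_on S (\<lambda>x. cinner a (f x))" if "continuous_on S f"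
  unfolding cinner_def by (intro continuous_intros that)

locale umeas = onb P e m for P :: "complex^'n^'n" and e m +
  fixes u :: "(complex^'n) measure"
  assumes usm: "uniform_sphere_measure (subsp P) u" and Pnz: "P \<noteq> 0"
begin

lemma prob: "prob_space u" using usm unfolding uniform_sphere_measure_def by blast

lemma space_u: "space u = {x. P *v x = x \<and> norm x = 1}"
  using usm unfolding uniform_sphere_measure_def unit_sphere_of_def by (auto simp: subsp_iff)

lemma sets_u: "sets u = sets (restrict_space borel (space u))"
  using usm unfolding uniform_sphere_measure_def by (simp add: space_u)

lemma space_u_sphere: "space u \<subseteq> sphere 0 1" using space_u by auto

lemma meas_cont: assumes "continuous_on UNIV f" shows "f \<in> borel_measurable u"
proof -
  have "f \<in> borel_measurable (restrict_space borel (space u))"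
    by (intro measurable_restrict_space1 borel_measurable_continuous_onI assms)
  then show ?thesis by (subst measurable_cong_sets[OF sets_u refl])
qed

lemma int_cont:
  fixes f :: "complex^'n \<Rightarrow> 'b::{banach,second_countable_topology}"
  assumes "continuous_on UNIV f" shows "integrable u f"
proof -
  have "compact (f ` sphere 0 1)"
    by (intro compact_continuous_image continuous_on_subset[OF assms]) auto
  then obtain B where B: "\<forall>y\<in>f ` sphere 0 1. norm y \<le> B"
    using compact_imp_bounded bounded_iff by metis
  have "AE x in u. norm (f x) \<le> B"
    using B space_u_sphere by (intro AE_I2) auto
  then show ?thesis
    using finite_measure.integrable_const_bound[OF prob_space.axioms(1)[OF prob] _ meas_cont[OF assms]]
    by blast
qed

lemma meas_U:
  assumes "unitary U" "\<And>x. P *v x = x \<Longrightarrow> P *v (U *v x) = U *v x"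
  shows "(\<lambda>x. U *v x) \<in> measurable u u"
proof -
  have c: "continuous_on UNIV (\<lambda>x. U *v x)"
    unfolding matrix_vector_mult_def by (intro continuous_intros)
  have "(\<lambda>x. U *v x) \<in> measurable (restrict_space borel (space u)) (restrict_space borel (space u))"
    by (intro measurable_restrict_space3 borel_measurable_continuous_onI c)
       (auto simp: space_u assms unitary_norm)
  then show ?thesis using measurable_cong_sets[OF sets_u sets_u] by simp
qed

lemma invariance:
  fixes f :: "complex^'n \<Rightarrow> 'b::{banach,second_countable_topology}"
  assumes "unitary U" "\<And>x. P *v x = x \<Longrightarrow> P *v (U *v x) = U *v x"
    and "continuous_on UNIV f"
  shows "(\<integral>x. f (U *v x) \<partial>u) = (\<integral>x. f x \<partial>u)"
proof -
  have "\<forall>x\<in>subsp P. U *v x \<in> subsp P" using assms(2) by (simp add: subsp_iff)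
  then have "distr u u (\<lambda>x. U *v x) = u"
    using usm assms(1) unfolding uniform_sphere_measure_def by blast
  then have "(\<integral>x. f x \<partial>u) = (\<integral>x. f x \<partial>(distr u u (\<lambda>x. U *v x)))" by simp
  also have "\<dots> = (\<integral>x. f (U *v x) \<partial>u)"
    by (rule integral_distr[OF meas_U[OF assms(1,2)] meas_cont[OF assms(3)]])
  finally show ?thesis by simp
qed

definition c :: "nat \<Rightarrow> complex^'n \<Rightarrow> complex" where "c k x = cinner (e k) x"

lemma cont_c[continuous_intros]: "continuous_on S (\<lambda>x. c k (f x))" if "continuous_on S f"
  unfolding c_def by (intro continuous_intros that)

definition E4 :: "nat \<Rightarrow> nat \<Rightarrow> nat \<Rightarrow> nat \<Rightarrow> complex" where
  "E4 k l p q = (\<integral>x. cnj (c k x) * c l x * cnj (c p x) * c q x \<partial>u)"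

definition E2 :: "nat \<Rightarrow> nat \<Rightarrow> complex" where
  "E2 k l = (\<integral>x. cnj (c k x) * c l x \<partial>u)"

lemma inv_E4:
  assumes V: "Vunit m V" and "k < m" "l < m" "p < m" "q < m"
  shows "E4 k l p q = (\<integral>x. cnj (tr V x k) * tr V x l * cnj (tr V x p) * tr V x q \<partial>u)"
proof -
  have "E4 k l p q = (\<integral>x. cnj (c k (Umat V *v x)) * c l (Umat V *v x) * cnj (c p (Umat V *v x)) * c q (Umat V *v x) \<partial>u)"
    unfolding E4_def
    by (rule invariance[OF Umat_unitary[OF V] Umat_range, symmetric]) (auto intro!: continuous_intros)
  also have "\<dots> = (\<integral>x. cnj (tr V x k) * tr V x l * cnj (tr V x p) * tr V x q \<partial>u)"
    using assms by (simp add: c_def Umat_coord)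
  finally show ?thesis .
qed

lemma inv_E2:
  assumes V: "Vunit m V" and "k < m" "l < m"
  shows "E2 k l = (\<integral>x. cnj (tr V x k) * tr V x l \<partial>u)"
proof -
  have "E2 k l = (\<integral>x. cnj (c k (Umat V *v x)) * c l (Umat V *v x) \<partial>u)"
    unfolding E2_def
    by (rule invariance[OF Umat_unitary[OF V] Umat_range, symmetric]) (auto intro!: continuous_intros)
  also have "\<dots> = (\<integral>x. cnj (tr V x k) * tr V x l \<partial>u)"
    using assms by (simp add: c_def Umat_coord)
  finally show ?thesis .
qed

definition ph :: "nat \<Rightarrow> nat \<Rightarrow> complex" where "ph j a = (if a = j then \<i> else 1)"
definition Vph :: "nat \<Rightarrow> nat \<Rightarrow> nat \<Rightarrow> complex" where
  "Vph j a b = (if a = b then ph j a else 0)"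

lemma Vph_unit: "Vunit m (Vph j)"
  unfolding Vunit_def Vph_def
  by (auto simp: if_distrib[of "\<lambda>x. _ * x"] if_distrib[of cnj] ph_def sum.delta cong: if_cong)

lemma tr_Vph: "k < m \<Longrightarrow> tr (Vph j) x k = ph j k * c k x"
  unfolding tr_def Vph_def c_def
  by (simp add: if_distrib[of "\<lambda>x. x * _"] sum.delta cong: if_cong)

lemma E4_phase:
  assumes "k < m" "l < m" "p < m" "q < m"
  shows "E4 k l p q = cnj (ph j k) * ph j l * cnj (ph j p) * ph j q * E4 k l p q"
proof -
  have "E4 k l p q = (\<integral>x. (cnj (ph j k) * ph j l * cnj (ph j p) * ph j q) * (cnj (c k x) * c l x * cnj (c p x) * c q x) \<partial>u)"
    unfolding inv_E4[OF Vph_unit[of j] assms] using assms by (simp add: tr_Vph mult_ac)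
  then show ?thesis unfolding E4_def by (simp only: integral_mult_right_zero)
qed

lemma E2_phase:
  assumes "k < m" "l < m"
  shows "E2 k l = cnj (ph j k) * ph j l * E2 k l"
proof -
  have "E2 k l = (\<integral>x. (cnj (ph j k) * ph j l) * (cnj (c k x) * c l x) \<partial>u)"
    unfolding inv_E2[OF Vph_unit[of j] assms] using assms by (simp add: tr_Vph mult_ac)
  then show ?thesis unfolding E2_def by (simp only: integral_mult_right_zero)
qed

lemma fix_zero: "(z::complex) = F * z \<Longrightarrow> F \<noteq> 1 \<Longrightarrow> z = 0"
  by (metis mult_cancel_right1 mult.commute)

lemma ph_same: "ph j j = \<i>" unfolding ph_def by simp
lemma ph_other: "a \<noteq> j \<Longrightarrow> ph j a = 1" unfolding ph_def by simp

lemma E2_zero: assumes "k < m" "l < m" "k \<noteq> l" shows "E2 k l = 0"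
proof (rule fix_zero)
  show "E2 k l = cnj (ph k k) * ph k l * E2 k l" by (rule E2_phase[OF assms(1,2)])
  show "cnj (ph k k) * ph k l \<noteq> 1" using assms(3) by (simp add: ph_same ph_other complex_eq_iff)
qed

lemma E4_zero:
  assumes "k < m" "l < m" "p < m" "q < m" "\<not> ((k = l \<and> p = q) \<or> (k = q \<and> p = l))"
  shows "E4 k l p q = 0"
proof (cases "k \<noteq> l \<and> k \<noteq> q")
  case True
  show ?thesis
  proof (rule fix_zero)
    show "E4 k l p q = cnj (ph k k) * ph k l * cnj (ph k p) * ph k q * E4 k l p q" by (rule E4_phase[OF assms(1-4)])
    have "ph k l = 1" "ph k q = 1" using True by (simp_all add: ph_other)
    then show "cnj (ph k k) * ph k l * cnj (ph k p) * ph k q \<noteq> 1"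
      by (cases "p = k") (simp_all add: ph_same ph_other complex_eq_iff)
  qed
next
  case False
  then consider "k = l" "p \<noteq> q" | "k = q" "k \<noteq> l" "p \<noteq> l" using assms(5) by blast
  then show ?thesis
  proof cases
    case 1
    show ?thesis
    proof (rule fix_zero)
      show "E4 k l p q = cnj (ph q k) * ph q l * cnj (ph q p) * ph q q * E4 k l p q" by (rule E4_phase[OF assms(1-4)])
      have a: "cnj (ph q k) * ph q l = 1" using 1
        by (cases "k = q") (simp_all add: ph_same ph_other complex_eq_iff)
      have "cnj (ph q k) * ph q l * cnj (ph q p) * ph q q = cnj (ph q p) * ph q q"
        using a by (metis mult.assoc mult_1)
      then show "cnj (ph q k) * ph q l * cnj (ph q p) * ph q q \<noteq> 1"
        using 1 by (simp add: ph_same ph_other complex_eq_iff)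
    qed
  next
    case 2
    show ?thesis
    proof (rule fix_zero)
      show "E4 k l p q = cnj (ph l k) * ph l l * cnj (ph l p) * ph l q * E4 k l p q" by (rule E4_phase[OF assms(1-4)])
      have "ph l k = 1" "ph l p = 1" "ph l q = 1" using 2 by (simp_all add: ph_other)
      then show "cnj (ph l k) * ph l l * cnj (ph l p) * ph l q \<noteq> 1"
        by (simp add: ph_same complex_eq_iff)
    qed
  qed
qed

end


context umeas
begin

definition Vperm :: "(nat \<Rightarrow> nat) \<Rightarrow> nat \<Rightarrow> nat \<Rightarrow> complex" where
  "Vperm \<sigma> a b = (if b = \<sigma> a then 1 else 0)"

lemma Vperm_unit: assumes "\<sigma> permutes {..<m}" shows "Vunit m (Vperm \<sigma>)"
  unfolding Vunit_def
proof (intro allI impI)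
  fix k l assume k: "k < m" and l: "l < m"
  have "(\<Sum>j<m. cnj (Vperm \<sigma> j k) * Vperm \<sigma> j l) = (\<Sum>j<m. if j = inv \<sigma> k then (if k = l then 1 else 0) else 0)"
  proof (intro sum.cong refl)
    fix j assume "j \<in> {..<m}"
    have "\<sigma> j = k \<longleftrightarrow> inv \<sigma> k = j" using permutes_inv_eq[OF assms] by blast
    then show "cnj (Vperm \<sigma> j k) * Vperm \<sigma> j l = (if j = inv \<sigma> k then (if k = l then 1 else 0) else 0)"
      unfolding Vperm_def by auto
  qed
  also have "\<dots> = (if k = l then 1 else 0)"
  proof -
    have "inv \<sigma> k \<in> {..<m}" using permutes_in_image[OF permutes_inv[OF assms]] k by simp
    then show ?thesis by (simp add: sum.delta')
  qed
  finally show "(\<Sum>j<m. cnj (Vperm \<sigma> j k) * Vperm \<sigma> j l) = (if k = l then 1 else 0)" .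
qed

lemma tr_Vperm: assumes "\<sigma> permutes {..<m}" "k < m" shows "tr (Vperm \<sigma>) x k = c (\<sigma> k) x"
proof -
  have "\<sigma> k < m" using permutes_in_image[OF assms(1)] assms(2) by simp
  then show ?thesis unfolding tr_def Vperm_def c_def
    by (simp add: if_distrib[of "\<lambda>x. x * _"] sum.delta' cong: if_cong)
qed

lemma E4_perm:
  assumes "\<sigma> permutes {..<m}" "k < m" "l < m" "p < m" "q < m"
  shows "E4 k l p q = E4 (\<sigma> k) (\<sigma> l) (\<sigma> p) (\<sigma> q)"
  unfolding inv_E4[OF Vperm_unit[OF assms(1)] assms(2-5)] using assms
  by (simp add: tr_Vperm E4_def)

lemma E2_perm:
  assumes "\<sigma> permutes {..<m}" "k < m" "l < m"
  shows "E2 k l = E2 (\<sigma> k) (\<sigma> l)"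
  unfolding inv_E2[OF Vperm_unit[OF assms(1)] assms(2-3)] using assms
  by (simp add: tr_Vperm E2_def)

lemma E4_swap1: "E4 k l p q = E4 p q k l"
  unfolding E4_def by (simp add: mult_ac)
lemma E4_swap2: "E4 k l p q = E4 k q p l"
  unfolding E4_def by (simp add: mult_ac)

lemma sq_sum_one: assumes "x \<in> space u" shows "(\<Sum>k<m. cnj (c k x) * c k x) = 1"
proof -
  have "(\<Sum>k<m. cnj (c k x) * c k x) = of_real (\<Sum>k<m. (cmod (c k x))^2)"
    unfolding of_real_sum by (intro sum.cong refl) (metis complex_norm_square mult.commute of_real_power)
  also have "\<dots> = of_real ((norm x)^2)" using coord_sq[of x] assms by (simp add: space_u c_def)
  also have "\<dots> = 1" using assms by (simp add: space_u)
  finally show ?thesis .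
qed

lemma int_one: "(\<integral>x. (1::complex) \<partial>u) = 1"
  using prob_space.prob_space[OF prob] by simp

lemma E2_sum: "(\<Sum>k<m. E2 k k) = 1"
proof -
  have "(\<Sum>k<m. E2 k k) = (\<integral>x. (\<Sum>k<m. cnj (c k x) * c k x) \<partial>u)"
    unfolding E2_def by (rule Bochner_Integration.integral_sum[symmetric]) (auto intro!: int_cont continuous_intros)
  also have "\<dots> = (\<integral>x. 1 \<partial>u)" by (rule Bochner_Integration.integral_cong) (simp_all add: sq_sum_one)
  finally show ?thesis using int_one by simp
qed

lemma E4_sum: "(\<Sum>k<m. \<Sum>p<m. E4 k k p p) = 1"
proof -
  have "(\<Sum>k<m. \<Sum>p<m. E4 k k p p) = (\<Sum>k<m. \<integral>x. (\<Sum>p<m. cnj (c k x) * c k x * cnj (c p x) * c p x) \<partial>u)"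
    unfolding E4_def by (intro sum.cong refl Bochner_Integration.integral_sum[symmetric]) (auto intro!: int_cont continuous_intros)
  also have "\<dots> = (\<integral>x. (\<Sum>k<m. \<Sum>p<m. cnj (c k x) * c k x * cnj (c p x) * c p x) \<partial>u)"
    by (rule Bochner_Integration.integral_sum[symmetric]) (auto intro!: int_cont continuous_intros)
  also have "\<dots> = (\<integral>x. (\<Sum>k<m. cnj (c k x) * c k x) * (\<Sum>p<m. cnj (c p x) * c p x) \<partial>u)"
    by (simp add: sum_distrib_left sum_distrib_right mult_ac)
  also have "\<dots> = (\<integral>x. 1 \<partial>u)" by (rule Bochner_Integration.integral_cong) (simp_all add: sq_sum_one)
  finally show ?thesis using int_one by simp
qed

end


definition rr :: complex where "rr = of_real (1 / sqrt 2)"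

lemma rr_sq: "rr * rr = 1 / 2"
proof -
  have "rr * rr = of_real (1 / sqrt 2 * (1 / sqrt 2))" unfolding rr_def by (simp only: of_real_mult)
  also have "1 / sqrt 2 * (1 / sqrt 2) = (1 / 2 :: real)" by (simp add: field_simps)
  finally show ?thesis by simp
qed

lemma rr_cnj: "cnj rr = rr" unfolding rr_def by simp

definition Vh :: "nat \<Rightarrow> nat \<Rightarrow> complex" where
  "Vh a b = (if a < 2 \<and> b < 2 then (if a = 1 \<and> b = 1 then - rr else rr) else if a = b then 1 else 0)"

lemma sum_split2: assumes "2 \<le> (m::nat)" shows "(\<Sum>j<m. f j) = f 0 + f 1 + (\<Sum>j\<in>{2..<m}. f j)"
proof -
  have "{..<m} = insert 0 (insert 1 {2..<m})" using assms by auto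
  then show ?thesis by (simp add: add.assoc)
qed

lemma Vh_unit: assumes "2 \<le> m" shows "Vunit m Vh"
  unfolding Vunit_def
proof (intro allI impI)
  fix k l assume k: "k < m" and l: "l < m"
  have rest: "(\<Sum>j\<in>{2..<m}. cnj (Vh j k) * Vh j l) = (if 2 \<le> k \<and> k = l then 1 else 0)"
  proof -
    have "(\<Sum>j\<in>{2..<m}. cnj (Vh j k) * Vh j l) = (\<Sum>j\<in>{2..<m}. if j = k then (if k = l then 1 else 0) else 0)"
      by (intro sum.cong refl) (auto simp: Vh_def)
    also have "\<dots> = (if 2 \<le> k \<and> k = l then 1 else 0)" using k by (simp add: sum.delta')
    finally show ?thesis .
  qed
  have "cnj (Vh 0 k) * Vh 0 l + cnj (Vh 1 k) * Vh 1 l + (if 2 \<le> k \<and> k = l then 1 else 0) = (if k = l then 1 else 0)"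
  proof -
    consider "2 \<le> k" | "k < 2" "2 \<le> l" | "k = 0" "l = 0" | "k = 0" "l = 1" | "k = 1" "l = 0" | "k = 1" "l = 1"
      by linarith
    then show ?thesis
      by cases (simp_all add: Vh_def rr_sq rr_cnj)
  qed
  then show "(\<Sum>j<m. cnj (Vh j k) * Vh j l) = (if k = l then 1 else 0)"
    unfolding sum_split2[OF assms] rest .
qed

context umeas
begin

lemma Vh_tr0: assumes "2 \<le> m" shows "tr Vh x 0 = rr * c 0 x + rr * c 1 x"
proof -
  have "(\<Sum>j\<in>{2..<m}. Vh 0 j * cinner (e j) x) = 0"
    by (intro sum.neutral) (auto simp: Vh_def)
  then show ?thesis unfolding tr_def sum_split2[OF assms] by (simp add: Vh_def c_def)
qed

lemma expand16:
  fixes f :: "nat \<Rightarrow> complex"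
  shows "cnj (f 0 + f 1) * (f 0 + f 1) * cnj (f 0 + f 1) * (f 0 + f 1) =
    (\<Sum>k\<in>{0,1}. \<Sum>l\<in>{0,1}. \<Sum>p\<in>{0,1}. \<Sum>q\<in>{0::nat,1}. cnj (f k) * f l * cnj (f p) * f q)"
  by (simp add: algebra_simps)

lemma E4_00: "0 < m \<Longrightarrow> k < m \<Longrightarrow> E4 k k k k = E4 0 0 0 0"
  using E4_perm[OF permutes_swap_id[of 0 "{..<m}" k], of 0 0 0 0] by simp

lemma E2_00: "0 < m \<Longrightarrow> k < m \<Longrightarrow> E2 k k = E2 0 0"
  using E2_perm[OF permutes_swap_id[of 0 "{..<m}" k], of 0 0] by simp

lemma E4_01: assumes "k < m" "p < m" "k \<noteq> p" shows "E4 k k p p = E4 0 0 1 1"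
proof -
  define p' where "p' = Transposition.transpose 0 k p"
  have p'0: "p' \<noteq> 0" unfolding p'_def using assms(3) by (auto simp: Transposition.transpose_def)
  have p'm: "p' < m" unfolding p'_def using assms by (auto simp: Transposition.transpose_def)
  have m2: "1 < m" using assms by linarith
  define \<sigma> where "\<sigma> = Transposition.transpose 0 k \<circ> Transposition.transpose 1 p'"
  have sp: "\<sigma> permutes {..<m}" unfolding \<sigma>_def
    by (intro permutes_compose permutes_swap_id) (use assms p'm m2 in auto)
  have s0: "\<sigma> 0 = k" unfolding \<sigma>_def using p'0 by (simp add: Transposition.transpose_def)
  have s1: "\<sigma> 1 = p" unfolding \<sigma>_def p'_def by simp
  show ?thesis using E4_perm[OF sp, of 0 0 1 1] m2 s0 s1 by simp
qed

lemma hadamard: assumes "2 \<le> m" shows "E4 0 0 0 0 = 2 * E4 0 0 1 1"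
proof -
  let ?f = "\<lambda>x k. c k x"
  have "E4 0 0 0 0 = (\<integral>x. cnj (tr Vh x 0) * tr Vh x 0 * cnj (tr Vh x 0) * tr Vh x 0 \<partial>u)"
    using inv_E4[OF Vh_unit[OF assms], of 0 0 0 0] assms by simp
  also have "\<dots> = (\<integral>x. (rr * rr * rr * rr) * (\<Sum>k\<in>{0,1}. \<Sum>l\<in>{0,1}. \<Sum>p\<in>{0,1}. \<Sum>q\<in>{0::nat,1}.
          cnj (c k x) * c l x * cnj (c p x) * c q x) \<partial>u)"
  proof (rule Bochner_Integration.integral_cong[OF refl])
    fix x
    have "cnj (tr Vh x 0) * tr Vh x 0 * cnj (tr Vh x 0) * tr Vh x 0
       = (rr * rr * rr * rr) * (cnj (c 0 x + c 1 x) * (c 0 x + c 1 x) * cnj (c 0 x + c 1 x) * (c 0 x + c 1 x))"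
      unfolding Vh_tr0[OF assms] by (simp add: rr_cnj algebra_simps)
    also have "\<dots> = (rr * rr * rr * rr) * (\<Sum>k\<in>{0,1}. \<Sum>l\<in>{0,1}. \<Sum>p\<in>{0,1}. \<Sum>q\<in>{0::nat,1}.
          cnj (c k x) * c l x * cnj (c p x) * c q x)"
      using expand16[of "?f x"] by simp
    finally show "cnj (tr Vh x 0) * tr Vh x 0 * cnj (tr Vh x 0) * tr Vh x 0 = (rr * rr * rr * rr) * (\<Sum>k\<in>{0,1}. \<Sum>l\<in>{0,1}. \<Sum>p\<in>{0,1}. \<Sum>q\<in>{0::nat,1}.
          cnj (c k x) * c l x * cnj (c p x) * c q x)" .
  qed
  also have "\<dots> = (rr * rr * rr * rr) * (\<Sum>k\<in>{0,1}. \<Sum>l\<in>{0,1}. \<Sum>p\<in>{0,1}. \<Sum>q\<in>{0::nat,1}. E4 k l p q)"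
    unfolding integral_mult_right_zero E4_def
    by (subst Bochner_Integration.integral_sum, fastforce intro!: int_cont continuous_intros,
        intro arg_cong[where f="\<lambda>z. _ * z"] sum.cong refl,
        subst Bochner_Integration.integral_sum, fastforce intro!: int_cont continuous_intros,
        intro sum.cong refl,
        subst Bochner_Integration.integral_sum, fastforce intro!: int_cont continuous_intros,
        intro sum.cong refl,
        subst Bochner_Integration.integral_sum, fastforce intro!: int_cont continuous_intros, rule refl)
  also have "\<dots> = (1/4) * (2 * E4 0 0 0 0 + 4 * E4 0 0 1 1)"
  proof -
    have m: "0 < m" "1 < m" using assms by auto
    have z: "E4 k l p q = 0" if "k < 2" "l < 2" "p < 2" "q < 2" "\<not> ((k = l \<and> p = q) \<or> (k = q \<and> p = l))" for k l p q
      using E4_zero[of k l p q] that m by simp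
    have e1: "E4 0 1 1 0 = E4 0 0 1 1" by (rule E4_swap2)
    have e2: "E4 1 0 0 1 = E4 0 0 1 1" by (metis E4_swap1 E4_swap2)
    have e3: "E4 1 1 0 0 = E4 0 0 1 1" by (rule E4_swap1)
    have e4: "E4 1 1 1 1 = E4 0 0 0 0" using E4_00[OF m(1) m(2)] .
    have rr4: "rr * rr * rr * rr = 1 / 4"
    proof -
      have "rr * rr * rr * rr = (rr * rr) * (rr * rr)" by (simp add: mult.assoc)
      also have "\<dots> = 1 / 4" by (simp add: rr_sq)
      finally show ?thesis .
    qed
    show ?thesis unfolding rr4 using z e1 e2 e3 e4 by simp
  qed
  finally show ?thesis by (simp add: field_simps)
qed

lemma E2_formula: assumes "k < m" "l < m" shows "E2 k l = (if k = l then 1 / of_nat m else 0)"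
proof (cases "k = l")
  case True
  have m: "0 < m" using assms by simp
  have "(\<Sum>k<m. E2 k k) = (\<Sum>k<m. E2 0 0)" by (intro sum.cong refl E2_00[OF m]) auto
  then have "(\<Sum>k<m. E2 k k) = of_nat m * E2 0 0" by simp
  then have "E2 0 0 = 1 / of_nat m" using E2_sum m by (simp add: field_simps)
  then show ?thesis using True E2_00[OF m assms(1)] by simp
next
  case False
  then show ?thesis using E2_zero assms by simp
qed

lemma E4_formula:
  assumes "k < m" "l < m" "p < m" "q < m"
  shows "E4 k l p q = ((if k = l \<and> p = q then 1 else 0) + (if k = q \<and> p = l then 1 else 0)) / (of_nat m * (of_nat m + 1))"
proof -
  have m: "0 < m" using assms by simp
  define a where "a = E4 0 0 0 0"
  define b where "b = E4 0 0 1 1"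
  have mm1: "(of_nat m :: complex) \<noteq> 0" using m by simp
  have "(of_nat m + 1 :: complex) = of_nat (m + 1)" by simp
  then have mm2: "(of_nat m + 1 :: complex) \<noteq> 0" by (metis add_eq_0_iff_both_eq_0 of_nat_eq_0_iff one_neq_zero)
  have mm: "(of_nat m :: complex) * (of_nat m + 1) \<noteq> 0" using mm1 mm2 by simp
  have ab: "a = 2 / (of_nat m * (of_nat m + 1)) \<and> (2 \<le> m \<longrightarrow> b = 1 / (of_nat m * (of_nat m + 1)))"
  proof (cases "m = 1")
    case True
    then have "a = 1" using E4_sum unfolding a_def by simp
    then show ?thesis using True by simp
  next
    case False
    then have m2: "2 \<le> m" using m by simp
    have row: "(\<Sum>p<m. E4 k k p p) = a + of_nat (m - 1) * b" if "k < m" for k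
    proof -
      have "(\<Sum>p<m. E4 k k p p) = E4 k k k k + (\<Sum>p\<in>{..<m} - {k}. E4 k k p p)"
        using that by (simp add: sum.remove)
      also have "(\<Sum>p\<in>{..<m} - {k}. E4 k k p p) = (\<Sum>p\<in>{..<m} - {k}. b)"
        unfolding b_def using that by (intro sum.cong refl E4_01) auto
      also have "\<dots> = of_nat (m - 1) * b" using that by simp
      finally show ?thesis unfolding a_def using E4_00[OF m that] by simp
    qed
    have "1 = (\<Sum>k<m. a + of_nat (m - 1) * b)" using E4_sum row by simp
    also have "\<dots> = of_nat m * (a + of_nat (m - 1) * b)" by (simp only: sum_constant card_lessThan)
    finally have s: "of_nat m * (a + of_nat (m - 1) * b) = 1" by simp
    have h: "a = 2 * b" using hadamard[OF m2] unfolding a_def b_def .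
    have mm1: "(of_nat (m - 1) :: complex) = of_nat m - 1" using m by (cases m) simp_all
    have "b * (of_nat m * (of_nat m + 1)) = 1" using s unfolding h mm1 by (simp add: algebra_simps)
    then have bv: "b = 1 / (of_nat m * (of_nat m + 1))" using mm by (simp add: field_simps)
    then show ?thesis using h by simp
  qed
  show ?thesis
  proof (cases "(k = l \<and> p = q) \<or> (k = q \<and> p = l)")
    case False
    have "E4 k l p q = 0" using E4_zero[OF assms False] .
    moreover have "\<not> (k = l \<and> p = q)" "\<not> (k = q \<and> p = l)" using False by auto
    ultimately show ?thesis by (simp only: if_False) simp
  next
    case True
    then consider "k = l" "p = q" "k = p" | "k = l" "p = q" "k \<noteq> p" | "k = q" "p = l" "k \<noteq> p" "k \<noteq> l" by blast
    then show ?thesis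
    proof cases
      case 1
      then show ?thesis using E4_00[OF m assms(1)] ab unfolding a_def by simp
    next
      case 2
      then have "2 \<le> m" using assms by linarith
      then show ?thesis using E4_01[of k p] 2 assms ab unfolding b_def by simp
    next
      case 3
      then have "2 \<le> m" using assms by linarith
      then show ?thesis using E4_01[of k p] E4_swap2[of k p p k] 3 assms ab unfolding b_def by simp
    qed
  qed
qed

end


lemma if_helper: "(z::complex) * (((if A then 1 else 0) + (if B then 1 else 0)) / D) = ((if A then z else 0) + (if B then z else 0)) / D"
  by (cases A; cases B) (simp_all add: field_simps)

context umeas
begin

definition Bc :: "complex^'n^'n \<Rightarrow> nat \<Rightarrow> nat \<Rightarrow> complex" where
  "Bc B k l = cinner (e k) (B *v e l)"

lemma Q_expand: assumes "x \<in> space u"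
  shows "cinner x (B *v x) = (\<Sum>k<m. \<Sum>l<m. Bc B k l * (cnj (c k x) * c l x))"
  using quad_expand[of x B] assms by (simp add: space_u Bc_def c_def mult_ac)

lemma int_Q: "(\<integral>x. cinner x (B *v x) \<partial>u) = (\<Sum>k<m. Bc B k k) / of_nat m"
proof -
  have "(\<integral>x. cinner x (B *v x) \<partial>u) = (\<integral>x. (\<Sum>k<m. \<Sum>l<m. Bc B k l * (cnj (c k x) * c l x)) \<partial>u)"
    by (rule Bochner_Integration.integral_cong[OF refl]) (simp add: Q_expand)
  also have "\<dots> = (\<Sum>k<m. \<Sum>l<m. Bc B k l * E2 k l)"
    unfolding E2_def
    by (subst Bochner_Integration.integral_sum, fastforce intro!: int_cont continuous_intros,
        intro sum.cong refl,
        subst Bochner_Integration.integral_sum, fastforce intro!: int_cont continuous_intros,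
        intro sum.cong refl integral_mult_right_zero)
  also have "\<dots> = (\<Sum>k<m. \<Sum>l<m. if k = l then Bc B k k / of_nat m else 0)"
    by (intro sum.cong refl) (simp add: E2_formula)
  also have "\<dots> = (\<Sum>k<m. Bc B k k / of_nat m)"
    by (intro sum.cong refl) (simp add: sum.delta)
  also have "\<dots> = (\<Sum>k<m. Bc B k k) / of_nat m" by (simp add: sum_divide_distrib)
  finally show ?thesis .
qed

lemma int_QQ: "(\<integral>x. cinner x (B *v x) * cinner x (B *v x) \<partial>u) =
   ((\<Sum>k<m. Bc B k k) * (\<Sum>k<m. Bc B k k) + (\<Sum>k<m. \<Sum>l<m. Bc B k l * Bc B l k)) / (of_nat m * (of_nat m + 1))"
proof -
  let ?D = "of_nat m * (of_nat m + 1) :: complex"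
  have "(\<integral>x. cinner x (B *v x) * cinner x (B *v x) \<partial>u) =
     (\<integral>x. (\<Sum>k<m. \<Sum>l<m. \<Sum>p<m. \<Sum>q<m. (Bc B k l * Bc B p q) * (cnj (c k x) * c l x * cnj (c p x) * c q x)) \<partial>u)"
  proof (rule Bochner_Integration.integral_cong[OF refl])
    fix x assume x: "x \<in> space u"
    let ?a = "\<lambda>k l. Bc B k l * (cnj (c k x) * c l x)"
    have "cinner x (B *v x) * cinner x (B *v x) = (\<Sum>k<m. \<Sum>l<m. ?a k l) * (\<Sum>p<m. \<Sum>q<m. ?a p q)"
      using Q_expand[OF x] by simp
    also have "\<dots> = (\<Sum>k<m. \<Sum>l<m. ?a k l * (\<Sum>p<m. \<Sum>q<m. ?a p q))"
      by (simp only: sum_distrib_right)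
    also have "\<dots> = (\<Sum>k<m. \<Sum>l<m. \<Sum>p<m. \<Sum>q<m. ?a k l * ?a p q)"
      by (simp only: sum_distrib_left)
    also have "\<dots> = (\<Sum>k<m. \<Sum>l<m. \<Sum>p<m. \<Sum>q<m. (Bc B k l * Bc B p q) * (cnj (c k x) * c l x * cnj (c p x) * c q x))"
      by (intro sum.cong refl) (simp add: mult_ac)
    finally show "cinner x (B *v x) * cinner x (B *v x) = (\<Sum>k<m. \<Sum>l<m. \<Sum>p<m. \<Sum>q<m. (Bc B k l * Bc B p q) * (cnj (c k x) * c l x * cnj (c p x) * c q x))" .
  qed
  also have "\<dots> = (\<Sum>k<m. \<Sum>l<m. \<Sum>p<m. \<Sum>q<m. (Bc B k l * Bc B p q) * E4 k l p q)"
    unfolding E4_def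
    by (subst Bochner_Integration.integral_sum, fastforce intro!: int_cont continuous_intros,
        intro sum.cong refl,
        subst Bochner_Integration.integral_sum, fastforce intro!: int_cont continuous_intros,
        intro sum.cong refl,
        subst Bochner_Integration.integral_sum, fastforce intro!: int_cont continuous_intros,
        intro sum.cong refl,
        subst Bochner_Integration.integral_sum, fastforce intro!: int_cont continuous_intros,
        intro sum.cong refl integral_mult_right_zero)
  also have "\<dots> = (\<Sum>k<m. \<Sum>l<m. \<Sum>p<m. \<Sum>q<m.
        ((if k = l \<and> p = q then Bc B k l * Bc B p q else 0) + (if k = q \<and> p = l then Bc B k l * Bc B p q else 0)) / ?D)"
  proof (intro sum.cong refl)
    fix k l p q assume "k \<in> {..<m}" "l \<in> {..<m}" "p \<in> {..<m}" "q \<in> {..<m}"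
    then have "E4 k l p q = ((if k = l \<and> p = q then 1 else 0) + (if k = q \<and> p = l then 1 else 0)) / ?D"
      by (intro E4_formula) auto
    then show "(Bc B k l * Bc B p q) * E4 k l p q =
      ((if k = l \<and> p = q then Bc B k l * Bc B p q else 0) + (if k = q \<and> p = l then Bc B k l * Bc B p q else 0)) / ?D"
      by (simp only: if_helper)
  qed
  also have "\<dots> = (\<Sum>k<m. \<Sum>l<m. \<Sum>p<m.
        ((if k = l then Bc B k l * Bc B p p else 0) + (if p = l then Bc B k l * Bc B p k else 0)) / ?D)"
  proof (intro sum.cong refl)
    fix k l p assume "k \<in> {..<m}" "l \<in> {..<m}" "p \<in> {..<m}"
    then show "(\<Sum>q<m. ((if k = l \<and> p = q then Bc B k l * Bc B p q else 0) + (if k = q \<and> p = l then Bc B k l * Bc B p q else 0)) / ?D) =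
        ((if k = l then Bc B k l * Bc B p p else 0) + (if p = l then Bc B k l * Bc B p k else 0)) / ?D"
      by (simp add: sum.distrib add_divide_distrib sum_divide_distrib[symmetric] if_distrib[of "\<lambda>x. x / _"] sum.delta sum.delta' cong: if_cong)
  qed
  also have "\<dots> = (\<Sum>k<m. \<Sum>l<m. ((if k = l then Bc B k l * (\<Sum>p<m. Bc B p p) else 0) + Bc B k l * Bc B l k) / ?D)"
  proof (intro sum.cong refl)
    fix k l assume "k \<in> {..<m}" "l \<in> {..<m}"
    then show "(\<Sum>p<m. ((if k = l then Bc B k l * Bc B p p else 0) + (if p = l then Bc B k l * Bc B p k else 0)) / ?D) =
       ((if k = l then Bc B k l * (\<Sum>p<m. Bc B p p) else 0) + Bc B k l * Bc B l k) / ?D"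
      by (simp add: sum.distrib add_divide_distrib sum_divide_distrib[symmetric] sum_distrib_left sum.delta')
  qed
  also have "\<dots> = ((\<Sum>k<m. Bc B k k) * (\<Sum>k<m. Bc B k k) + (\<Sum>k<m. \<Sum>l<m. Bc B k l * Bc B l k)) / ?D"
    by (simp add: sum.distrib add_divide_distrib sum_divide_distrib[symmetric] sum_distrib_right sum.delta)
  finally show ?thesis .
qed

end


context umeas
begin

lemma cont_Q[continuous_intros]: "continuous_on S (\<lambda>x. cinner x (B *v x))"
  unfolding cinner_def matrix_vector_mult_def by (intro continuous_intros)

lemma Q_real: assumes "cadj B = B" shows "cnj (cinner x (B *v x)) = cinner x (B *v x)"
  by (metis assms cinner_adj cinner_cnj)

lemma Q_ofreal: assumes "cadj B = B" shows "cinner x (B *v x) = of_real (Re (cinner x (B *v x)))"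
  using Q_real[OF assms, of x] by (metis Reals_cnj_iff complex_is_Real_iff of_real_Re)

lemma Bc_cnj: assumes "cadj B = B" shows "Bc B l k = cnj (Bc B k l)"
  unfolding Bc_def by (metis assms cinner_adj cinner_cnj)

lemma norm_e: assumes "k < m" shows "norm (e k) = 1"
proof -
  have "complex_of_real ((norm (e k))^2) = 1" using e_orth[of k k] cinner_self[of "e k"] assms by simp
  then have "(norm (e k))^2 = 1^2" by (metis of_real_eq_1_iff power_one)
  then show ?thesis using power2_eq_iff_nonneg[of "norm (e k)" 1] by simp
qed

lemma HS_bound:
  assumes "\<And>x. norm (B *v x) \<le> norm x"
  shows "(\<Sum>k<m. \<Sum>l<m. (cmod (Bc B k l))^2) \<le> real m"
proof -
  have "(\<Sum>k<m. \<Sum>l<m. (cmod (Bc B k l))^2) = (\<Sum>l<m. \<Sum>k<m. (cmod (cinner (e k) (B *v e l)))^2)"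
    unfolding Bc_def by (rule sum.swap)
  also have "\<dots> \<le> (\<Sum>l<m. (norm (B *v e l))^2)"
    by (intro sum_mono bessel)
  also have "\<dots> \<le> (\<Sum>l<m. 1)"
    by (intro sum_mono) (metis assms lessThan_iff norm_e norm_ge_zero power_le_one)
  finally show ?thesis by simp
qed

lemma moments:
  assumes sa: "cadj B = B" and nb: "\<And>x. norm (B *v x) \<le> norm x"
  defines "X \<equiv> \<lambda>x. Re (cinner x (B *v x))"
  defines "w0 \<equiv> Re (\<Sum>k<m. Bc B k k) / real m"
  shows "(\<integral>x. X x \<partial>u) = w0" and "(\<integral>x. (X x - w0)^2 \<partial>u) \<le> 1 / (real m + 1)"
proof -
  have m: "0 < m" using m_pos[OF Pnz] .
  have Xc: "continuous_on UNIV X" unfolding X_def by (intro continuous_intros)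
  have intX: "integrable u X" by (rule int_cont[OF Xc])
  have intX2: "integrable u (\<lambda>x. X x * X x)" by (rule int_cont) (intro continuous_intros Xc)
  have "of_real (\<integral>x. X x \<partial>u) = (\<integral>x. cinner x (B *v x) \<partial>u)"
    unfolding X_def integral_complex_of_real[symmetric] using Q_ofreal[OF sa] by simp
  also have "\<dots> = (\<Sum>k<m. Bc B k k) / of_nat m" by (rule int_Q)
  finally have EX: "(\<integral>x. X x \<partial>u) = w0" unfolding w0_def
    by (metis Re_divide_of_nat Re_complex_of_real)
  then show "(\<integral>x. X x \<partial>u) = w0" .
  define \<tau> where "\<tau> = (\<Sum>k<m. Bc B k k)"
  define HS where "HS = (\<Sum>k<m. \<Sum>l<m. Bc B k l * Bc B l k)"
  have tau_real: "\<tau> = of_real (Re \<tau>)"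
  proof -
    have "Bc B k k = of_real (Re (Bc B k k))" for k
      using Bc_cnj[OF sa, of k k] by (metis Reals_cnj_iff complex_is_Real_iff of_real_Re)
    then show ?thesis unfolding \<tau>_def by (metis (no_types, lifting) Re_sum of_real_sum sum.cong)
  qed
  have HS_eq: "HS = of_real (\<Sum>k<m. \<Sum>l<m. (cmod (Bc B k l))^2)"
    unfolding HS_def of_real_sum
  proof (intro sum.cong refl)
    fix k l
    show "Bc B k l * Bc B l k = complex_of_real ((cmod (Bc B k l))\<^sup>2)"
      by (subst Bc_cnj[OF sa, of l k]) (metis complex_norm_square of_real_power)
  qed
  have "of_real (\<integral>x. X x * X x \<partial>u) = (\<integral>x. cinner x (B *v x) * cinner x (B *v x) \<partial>u)"
    unfolding integral_complex_of_real[symmetric] X_def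
    by (rule Bochner_Integration.integral_cong[OF refl]) (metis Q_ofreal[OF sa] of_real_mult)
  also have "\<dots> = (\<tau> * \<tau> + HS) / (of_nat m * (of_nat m + 1))"
    unfolding \<tau>_def HS_def by (rule int_QQ)
  also have "\<dots> = of_real ((Re \<tau> * Re \<tau> + (\<Sum>k<m. \<Sum>l<m. (cmod (Bc B k l))^2)) / (real m * (real m + 1)))"
  proof -
    obtain t where t: "\<tau> = of_real t" using tau_real by blast
    have "\<tau> * \<tau> + HS = of_real (Re \<tau> * Re \<tau> + (\<Sum>k<m. \<Sum>l<m. (cmod (Bc B k l))^2))"
      unfolding HS_eq t by simp
    then show ?thesis by simp
  qed
  finally have EX2: "(\<integral>x. X x * X x \<partial>u) = (Re \<tau> * Re \<tau> + (\<Sum>k<m. \<Sum>l<m. (cmod (Bc B k l))^2)) / (real m * (real m + 1))"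
    using of_real_eq_iff by blast
  have w0t: "w0 = Re \<tau> / real m" unfolding w0_def \<tau>_def ..
  have "(\<integral>x. (X x - w0)^2 \<partial>u) = (\<integral>x. X x * X x - 2 * w0 * X x + w0 * w0 \<partial>u)"
    by (simp add: power2_eq_square algebra_simps)
  also have "\<dots> = (\<integral>x. X x * X x \<partial>u) - 2 * w0 * (\<integral>x. X x \<partial>u) + w0 * w0"
  proof -
    have fm: "finite_measure u" using prob_space.axioms(1)[OF prob] .
    have i1: "integrable u (\<lambda>x. X x * X x - 2 * w0 * X x)"
      by (intro Bochner_Integration.integrable_diff intX2 integrable_mult_right intX)
    have i2: "integrable u (\<lambda>x. w0 * w0)" using finite_measure.integrable_const[OF fm] .
    have "(\<integral>x. X x * X x - 2 * w0 * X x + w0 * w0 \<partial>u) = (\<integral>x. X x * X x - 2 * w0 * X x \<partial>u) + (\<integral>x. w0 * w0 \<partial>u)"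
      by (rule Bochner_Integration.integral_add[OF i1 i2])
    also have "(\<integral>x. X x * X x - 2 * w0 * X x \<partial>u) = (\<integral>x. X x * X x \<partial>u) - (\<integral>x. 2 * w0 * X x \<partial>u)"
      by (rule Bochner_Integration.integral_diff[OF intX2 integrable_mult_right[OF intX]])
    also have "(\<integral>x. 2 * w0 * X x \<partial>u) = 2 * w0 * (\<integral>x. X x \<partial>u)" by simp
    also have "(\<integral>x. w0 * w0 \<partial>u) = w0 * w0" using prob_space.prob_space[OF prob] by simp
    finally show ?thesis .
  qed
  also have "\<dots> = (\<integral>x. X x * X x \<partial>u) - w0 * w0" using EX by simp
  also have "\<dots> \<le> 1 / (real m + 1)"
  proof -
    let ?S = "(\<Sum>k<m. \<Sum>l<m. (cmod (Bc B k l))^2)"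
    let ?t = "Re \<tau>"
    have S: "?S \<le> real m" by (rule HS_bound[OF nb])
    have mpos: "0 < real m" using m by simp
    have a: "?t * ?t / (real m * (real m + 1)) \<le> ?t * ?t / (real m * real m)"
      using mpos by (intro divide_left_mono) (auto intro: mult_pos_pos)
    have "?S / (real m * (real m + 1)) \<le> real m / (real m * (real m + 1))"
      by (rule divide_right_mono[OF S]) (use mpos in simp)
    also have "\<dots> = 1 / (real m + 1)" using mpos by simp
    finally have b: "?S / (real m * (real m + 1)) \<le> 1 / (real m + 1)" .
    have "(\<integral>x. X x * X x \<partial>u) - w0 * w0 = ?t * ?t / (real m * (real m + 1)) + ?S / (real m * (real m + 1)) - ?t * ?t / (real m * real m)"
      unfolding EX2 w0t by (simp add: add_divide_distrib)
    then show ?thesis using a b by linarith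
  qed
  finally show "(\<integral>x. (X x - w0)^2 \<partial>u) \<le> 1 / (real m + 1)" .
qed

lemma markov_most:
  fixes f :: "complex^'n \<Rightarrow> real"
  assumes cont: "continuous_on UNIV f" and nn: "\<And>x. x \<in> space u \<Longrightarrow> 0 \<le> f x"
    and Ef: "(\<integral>x. f x \<partial>u) \<le> 1 / (real m + 1)" and eps: "\<epsilon> > 0"
  shows "{x \<in> space u. f x \<le> 1 / (\<epsilon> * real m)} \<in> sets u \<and>
         measure u {x \<in> space u. f x \<le> 1 / (\<epsilon> * real m)} \<ge> 1 - \<epsilon>"
proof -
  have m: "0 < real m" using m_pos[OF Pnz] by simp
  define cc where "cc = 1 / (\<epsilon> * real m)"
  have ccpos: "0 < cc" unfolding cc_def using m eps by simp
  have [measurable]: "f \<in> borel_measurable u" by (rule meas_cont[OF cont])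
  have A: "{x \<in> space u. f x \<le> cc} \<in> sets u" by measurable
  have Bs: "{x \<in> space u. cc < f x} \<in> sets u" by measurable
  have Cs: "{x \<in> space u. cc \<le> f x} \<in> sets u" by measurable
  have intf: "integrable u f" by (rule int_cont[OF cont])
  have eq: "{x \<in> space u. f x \<le> cc} = space u - {x \<in> space u. cc < f x}" by auto
  have "measure u {x \<in> space u. cc < f x} \<le> measure u {x \<in> space u. cc \<le> f x}"
    using Cs prob_space.axioms(1)[OF prob] by (intro finite_measure.finite_measure_mono) auto
  also have "\<dots> \<le> (\<integral>x. f x \<partial>u) / cc"
    by (rule integral_Markov_inequality_measure[OF intf Cs _ ccpos]) (use nn in \<open>auto intro: AE_I2\<close>)
  also have "\<dots> \<le> (1 / (real m + 1)) / cc"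
    by (rule divide_right_mono[OF Ef]) (use ccpos in simp)
  also have "\<dots> = \<epsilon> * real m / (real m + 1)" unfolding cc_def by simp
  also have "\<dots> \<le> \<epsilon>" using eps m by (simp add: field_simps)
  finally have "measure u {x \<in> space u. cc < f x} \<le> \<epsilon>" .
  moreover have "measure u {x \<in> space u. f x \<le> cc} = 1 - measure u {x \<in> space u. cc < f x}"
    unfolding eq using prob_space.prob_compl[OF prob Bs] .
  ultimately show ?thesis using A unfolding cc_def by simp
qed

end


inductive sep :: "(real \<Rightarrow> 'x::topological_space \<Rightarrow> real) \<Rightarrow> bool" where
  base: "continuous_on UNIV a \<Longrightarrow> continuous_on UNIV b \<Longrightarrow> (\<And>t x. f t x = a t * b x) \<Longrightarrow> sep f"
| add: "sep f \<Longrightarrow> sep g \<Longrightarrow> (\<And>t x. h t x = f t x + g t x) \<Longrightarrow> sep h"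

lemma sep_mult1:
  assumes "sep f" "continuous_on UNIV a" "continuous_on UNIV b"
  shows "sep (\<lambda>t x. f t x * (a t * b x))"
  using assms
proof (induction arbitrary: a b rule: sep.induct)
  case (base a' b' f)
  show ?case
    by (rule sep.base[of "\<lambda>t. a' t * a t" "\<lambda>x. b' x * b x"]) (use base in \<open>auto intro!: continuous_intros simp: mult_ac\<close>)
next
  case (add f g h)
  show ?case
    by (rule sep.add[OF add.IH(1)[OF add.prems] add.IH(2)[OF add.prems]]) (simp add: add.hyps(3) distrib_right)
qed

lemma sep_mult:
  assumes "sep f" "sep g" shows "sep (\<lambda>t x. f t x * g t x)"
  using assms(2)
proof (induction rule: sep.induct)
  case (base a b g)
  show ?case using sep_mult1[OF assms(1) base(1,2)] base(3) by simp
next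
  case (add g1 g2 h)
  show ?case by (rule sep.add[OF add.IH]) (simp add: add.hyps(3) distrib_left)
qed

lemma sep_t: "continuous_on UNIV a \<Longrightarrow> sep (\<lambda>t x. a t)"
  by (rule sep.base[of a "\<lambda>x. 1"]) auto

lemma sep_x: "continuous_on UNIV b \<Longrightarrow> sep (\<lambda>t x. b x)"
  by (rule sep.base[of "\<lambda>t. 1" b]) auto

lemma sep_add: "sep f \<Longrightarrow> sep g \<Longrightarrow> sep (\<lambda>t x. f t x + g t x)"
  by (rule sep.add) auto

lemma sep_diff: "sep f \<Longrightarrow> sep g \<Longrightarrow> sep (\<lambda>t x. f t x - g t x)"
proof -
  assume f: "sep f" and g: "sep g"
  have "sep (\<lambda>t x. g t x * (- 1))" using sep_mult[OF g sep_t[of "\<lambda>t. -1"]] by simp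
  then show ?thesis by (rule sep.add[OF f]) simp
qed

lemma sep_sum: "finite I \<Longrightarrow> (\<And>i. i \<in> I \<Longrightarrow> sep (f i)) \<Longrightarrow> sep (\<lambda>t x. \<Sum>i\<in>I. f i t x)"
proof (induction I rule: finite_induct)
  case empty
  then show ?case by (simp add: sep_t[of "\<lambda>t. 0", simplified])
next
  case (insert i I)
  then show ?case by (simp add: sep_add)
qed

lemma hk_mult_right: "integral S (\<lambda>t. a t * (c::real)) = integral S a * c"
proof -
  have "integral S (\<lambda>t. a t * c) = integral S (\<lambda>t. c *\<^sub>R a t)" by (simp add: mult.commute)
  also have "\<dots> = c *\<^sub>R integral S a" by (rule integral_cmul)
  finally show ?thesis by (simp add: mult.commute)
qed

lemma sep_cont_x: "sep f \<Longrightarrow> continuous_on UNIV (f t)"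
proof (induction rule: sep.induct)
  case (base a b f)
  then show ?case by (simp add: base(3)[abs_def] continuous_intros)
next
  case (add f g h)
  then show ?case by (simp add: add(3)[abs_def] continuous_intros)
qed

lemma sep_int_t: "sep f \<Longrightarrow> (\<lambda>t. f t x) integrable_on {0..T}"
proof (induction rule: sep.induct)
  case (base a b f)
  have "a integrable_on {0..T}"
    by (rule integrable_continuous_interval) (use base in \<open>auto intro: continuous_on_subset\<close>)
  then show ?case unfolding base(3) by (rule integrable_on_mult_left)
next
  case (add f g h)
  show ?case unfolding add(3) by (rule integrable_add[OF add.IH])
qed

lemma sep_cont_int: "sep f \<Longrightarrow> continuous_on UNIV (\<lambda>x. integral {0..T} (\<lambda>t. f t x))"
proof (induction rule: sep.induct)
  case (base a b f)
  have "integral {0..T} (\<lambda>t. f t x) = integral {0..T} a * b x" for x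
    unfolding base(3) by (rule hk_mult_right)
  then show ?case using base(2) by (simp add: continuous_intros)
next
  case (add f g h)
  have "integral {0..T} (\<lambda>t. h t x) = integral {0..T} (\<lambda>t. f t x) + integral {0..T} (\<lambda>t. g t x)" for x
    unfolding add(3) by (rule integral_add[OF sep_int_t[OF add(1)] sep_int_t[OF add(2)]])
  then show ?case using add by (simp add: continuous_intros)
qed


lemma sep_cong: "sep f \<Longrightarrow> (\<And>t x. g t x = f t x) \<Longrightarrow> sep g"
proof -
  assume "sep f" "\<And>t x. g t x = f t x"
  then have "g = f" by (intro ext) auto
  then show "sep g" using \<open>sep f\<close> by simp
qed

context umeas
begin

lemma sep_int_u: "sep f \<Longrightarrow> integrable u (f t)"
  by (rule int_cont[OF sep_cont_x])

lemma sep_swap: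
  assumes "sep f"
  shows "(\<lambda>t. \<integral>x. f t x \<partial>u) integrable_on {0..T} \<and>
    (\<integral>x. integral {0..T} (\<lambda>t. f t x) \<partial>u) = integral {0..T} (\<lambda>t. \<integral>x. f t x \<partial>u)"
  using assms
proof (induction rule: sep.induct)
  case (base a b f)
  have a_int: "a integrable_on {0..T}"
    by (rule integrable_continuous_interval) (use base in \<open>auto intro: continuous_on_subset\<close>)
  have e1: "(\<lambda>t. \<integral>x. f t x \<partial>u) = (\<lambda>t. a t * (\<integral>x. b x \<partial>u))"
    unfolding base(3) by simp
  have e2: "(\<lambda>x. integral {0..T} (\<lambda>t. f t x)) = (\<lambda>x. integral {0..T} a * b x)"
    unfolding base(3) by (simp add: hk_mult_right)
  show ?case unfolding e1 e2
    by (simp add: hk_mult_right integrable_on_mult_left[OF a_int])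
next
  case (add f g h)
  have i1: "integrable u (\<lambda>x. integral {0..T} (\<lambda>t. f t x))" by (rule int_cont[OF sep_cont_int[OF add(1)]])
  have i2: "integrable u (\<lambda>x. integral {0..T} (\<lambda>t. g t x))" by (rule int_cont[OF sep_cont_int[OF add(2)]])
  have e1: "(\<lambda>t. \<integral>x. h t x \<partial>u) = (\<lambda>t. (\<integral>x. f t x \<partial>u) + (\<integral>x. g t x \<partial>u))"
    unfolding add(3) by (intro ext Bochner_Integration.integral_add sep_int_u add(1,2))
  have e2: "(\<lambda>x. integral {0..T} (\<lambda>t. h t x)) = (\<lambda>x. integral {0..T} (\<lambda>t. f t x) + integral {0..T} (\<lambda>t. g t x))"
    unfolding add(3) by (intro ext integral_add sep_int_t add(1,2))
  show ?case unfolding e1 e2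
    using add.IH by (simp add: Bochner_Integration.integral_add[OF i1 i2] integral_add integrable_add)
qed

end

definition mcont :: "(real \<Rightarrow> complex^'n^'n) \<Rightarrow> bool" where
  "mcont A \<longleftrightarrow> (\<forall>i j. continuous_on UNIV (\<lambda>t. A t $ i $ j))"

lemma mcont_const: "mcont (\<lambda>t. A)" unfolding mcont_def by simp

lemma mcont_mult: "mcont A \<Longrightarrow> mcont B \<Longrightarrow> mcont (\<lambda>t. A t ** B t)"
  unfolding mcont_def matrix_matrix_mult_def by (simp add: continuous_on_sum continuous_on_mult)

lemma mcont_cexpm: "mcont (\<lambda>t. cexpm (c * of_real t) H)"
  unfolding mcont_def using continuous_cexpm_entry by blast

lemma mcont_trace: "mcont A \<Longrightarrow> continuous_on UNIV (\<lambda>t. trace (A t))"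
  unfolding mcont_def trace_def by (simp add: continuous_on_sum)


lemma norm_sq_expand:
  fixes M :: "complex^'n^'n"
  shows "(norm (M *v x))^2 = (\<Sum>i\<in>UNIV. (\<Sum>j\<in>UNIV. Re (M$i$j) * Re (x$j) - Im (M$i$j) * Im (x$j))^2
                           + (\<Sum>j\<in>UNIV. Re (M$i$j) * Im (x$j) + Im (M$i$j) * Re (x$j))^2)"
  unfolding norm_vec_sq
  by (intro sum.cong refl) (simp add: cmod_power2 matrix_vector_mult_def Re_sum Im_sum)

lemma sep_normsq:
  fixes M :: "real \<Rightarrow> complex^'n^'n"
  assumes "mcont M"
  shows "sep (\<lambda>t x. (norm (M t *v x))^2)"
proof -
  have cRe: "continuous_on UNIV (\<lambda>t. Re (M t $ i $ j))" for i j
    using assms unfolding mcont_def by (auto intro: continuous_intros)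
  have cIm: "continuous_on UNIV (\<lambda>t. Im (M t $ i $ j))" for i j
    using assms unfolding mcont_def by (auto intro: continuous_intros)
  have cx1: "continuous_on UNIV (\<lambda>x::complex^'n. Re (x $ j))" for j
    by (intro continuous_intros)
  have cx2: "continuous_on UNIV (\<lambda>x::complex^'n. Im (x $ j))" for j
    by (intro continuous_intros)
  have sRe: "sep (\<lambda>t x::complex^'n. \<Sum>j\<in>UNIV. Re (M t $i$j) * Re (x$j) - Im (M t $i$j) * Im (x$j))" for i
    by (intro sep_sum sep_diff sep.base[OF cRe cx1] sep.base[OF cIm cx2]) auto
  have sIm: "sep (\<lambda>t x::complex^'n. \<Sum>j\<in>UNIV. Re (M t $i$j) * Im (x$j) + Im (M t $i$j) * Re (x$j))" for i
    by (intro sep_sum sep_add sep.base[OF cRe cx2] sep.base[OF cIm cx1]) auto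
  let ?R = "\<lambda>i t (x::complex^'n). \<Sum>j\<in>UNIV. Re (M t $i$j) * Re (x$j) - Im (M t $i$j) * Im (x$j)"
  let ?I = "\<lambda>i t (x::complex^'n). \<Sum>j\<in>UNIV. Re (M t $i$j) * Im (x$j) + Im (M t $i$j) * Re (x$j)"
  have si: "sep (\<lambda>t x. ?R i t x * ?R i t x + ?I i t x * ?I i t x)" for i
    by (rule sep_add[OF sep_mult[OF sRe sRe] sep_mult[OF sIm sIm]])
  have "sep (\<lambda>t x. \<Sum>i\<in>UNIV. ?R i t x * ?R i t x + ?I i t x * ?I i t x)"
    by (rule sep_sum) (use si in auto)
  then show ?thesis
    apply (rule sep_cong)
    apply (subst norm_sq_expand)
    apply (simp only: power2_eq_square)
    done
qed

theorem theorem1: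
  fixes Ms :: "'m set" and P :: "'m \<Rightarrow> complex^'n^'n" and H :: "complex^'n^'n"
    and \<mu> \<nu> :: 'm and u :: "(complex^'n) measure"
  assumes "macro_decomposition Ms P"
    and "self_adjoint H"
    and "\<mu> \<in> Ms" and "\<nu> \<in> Ms"
    and "uniform_sphere_measure (subsp (P \<mu>)) u"
  defines "d \<equiv> real (cdim (subsp (P \<mu>)))"
    and "w \<equiv> wfun H (P \<mu>) (P \<nu>)"
  shows "(\<forall>t. 0 \<le> w t \<and> w t \<le> 1)
    \<and> (\<forall>t. \<forall>\<epsilon>>0. most u \<epsilon> (\<lambda>\<psi>0.
          \<bar>(norm (P \<nu> *v evol H t \<psi>0))\<^sup>2 - w t\<bar> \<le> 1 / sqrt (\<epsilon> * d)))
    \<and> (\<forall>T>0. \<forall>\<epsilon>>0. most u \<epsilon> (\<lambda>\<psi>0.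
          (1 / T) * integral {0..T} (\<lambda>t. \<bar>(norm (P \<nu> *v evol H t \<psi>0))\<^sup>2 - w t\<bar>\<^sup>2)
            \<le> 1 / (\<epsilon> * d)))"
proof -
  have PM: "P \<mu> ** P \<mu> = P \<mu>" "cadj (P \<mu>) = P \<mu>" "P \<mu> \<noteq> 0"
    using assms(1,3) unfolding macro_decomposition_def by auto
  have PN: "P \<nu> ** P \<nu> = P \<nu>" "cadj (P \<nu>) = P \<nu>"
    using assms(1,4) unfolding macro_decomposition_def by auto
  interpret pm: projection "P \<mu>" using PM by unfold_locales
  interpret pn: projection "P \<nu>" using PN by unfold_locales
  obtain e m where eS: "\<forall>k<m. e k \<in> subsp (P \<mu>)" and eON: "ON e m"
    and span: "\<forall>x\<in>subsp (P \<mu>). x = (\<Sum>k<m. cinner (e k) x *s e k)"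
    using ON_basis_exists[OF pm.subspace] by blast
  have dm: "d = real m"
    unfolding d_def cdim_def using ON_dim[OF pm.subspace eS eON span] by simp
  interpret ob: onb "P \<mu>" e m
    by unfold_locales (use eS eON span pm.subsp_iff in auto)
  interpret um: umeas "P \<mu>" e m u
    by unfold_locales (use assms(5) PM in auto)
  have mpos: "0 < m" using ob.m_pos[OF PM(3)] .
  define U where "U = (\<lambda>t. cexpm (- \<i> * of_real t) H)"
  define B where "B = (\<lambda>t. cadj (U t) ** P \<nu> ** U t)"
  define X where "X = (\<lambda>t x. Re (cinner x (B t *v x)))"
  have Ufold: "cexpm (- \<i> * of_real t) H = U t" for t by (simp add: U_def)
  have adjU: "cadj (U t) = cexpm (\<i> * of_real t) H" for t
    unfolding U_def using cadj_cexpm[OF assms(2)] by simp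
  have U1: "cadj (U t) ** U t = mat 1" for t
    unfolding adjU unfolding U_def using cexpm_inv[of "\<i> * of_real t" H] by simp
  have U2: "U t ** cadj (U t) = mat 1" for t
    unfolding adjU unfolding U_def using cexpm_inv[of "- \<i> * of_real t" H] by simp
  have unU: "unitary (U t)" for t unfolding unitary_def using U1 .
  have unU': "unitary (cadj (U t))" for t unfolding unitary_def using U2 by simp
  have Bsa: "cadj (B t) = B t" for t
    unfolding B_def by (simp add: cadj_mult PN(2) matrix_mul_assoc)
  have Bmv: "B t *v x = cadj (U t) *v (P \<nu> *v (U t *v x))" for t x
    unfolding B_def by (metis matrix_mul_assoc matrix_vector_mul_assoc)
  have Bnorm: "norm (B t *v x) \<le> norm x" for t x
  proof -
    have "norm (B t *v x) = norm (P \<nu> *v (U t *v x))" unfolding Bmv by (rule ob.unitary_norm[OF unU'])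
    also have "\<dots> \<le> norm (U t *v x)" by (rule pn.norm_P_le)
    also have "\<dots> = norm x" by (rule ob.unitary_norm[OF unU])
    finally show ?thesis .
  qed
  have Xeq: "(norm (P \<nu> *v evol H t x))^2 = X t x" for t x
  proof -
    have "(norm (P \<nu> *v evol H t x))^2 = Re (cinner (U t *v x) (P \<nu> *v (U t *v x)))"
      unfolding evol_def Ufold by (rule pn.norm_sq_cinner_P)
    also have "cinner (U t *v x) (P \<nu> *v (U t *v x)) = cinner x (cadj (U t) *v (P \<nu> *v (U t *v x)))"
      using cinner_adj[of x "cadj (U t)"] by simp
    finally show ?thesis unfolding X_def Bmv .
  qed
  have weq: "w t = Re (\<Sum>k<m. um.Bc (B t) k k) / real m" for t
  proof -
    have eqP: "P \<mu> ** cexpm (\<i> * of_real t) H ** P \<nu> ** cexpm (- \<i> * of_real t) H = P \<mu> ** B t"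
      unfolding B_def adjU[symmetric] Ufold by (simp add: matrix_mul_assoc)
    have "w t = Re (trace (P \<mu> ** B t)) / real m"
      unfolding w_def wfun_def d_def[symmetric] dm eqP ..
    then show ?thesis by (simp add: ob.trace_P um.Bc_def)
  qed
  have mom: "(\<integral>x. X t x \<partial>u) = w t" "(\<integral>x. (X t x - w t)^2 \<partial>u) \<le> 1 / (real m + 1)" for t
    using um.moments[OF Bsa Bnorm, of t] unfolding X_def weq by auto
  have X01: "0 \<le> X t x \<and> X t x \<le> 1" if "x \<in> space u" for t x
  proof -
    have "norm x = 1" using that um.space_u by auto
    then have "norm (P \<nu> *v (U t *v x)) \<le> 1" using pn.norm_P_le ob.unitary_norm[OF unU] by metis
    then have "(norm (P \<nu> *v evol H t x))^2 \<le> 1" unfolding evol_def Ufold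
      by (simp add: power_le_one)
    moreover have "0 \<le> (norm (P \<nu> *v evol H t x))^2" by simp
    ultimately show ?thesis using Xeq[of t x] by simp
  qed
  have contX: "continuous_on UNIV (X t)" for t unfolding X_def by (intro continuous_intros)
  have part1: "\<forall>t. 0 \<le> w t \<and> w t \<le> 1"
  proof
    fix t
    have "0 \<le> (\<integral>x. X t x \<partial>u)" by (rule integral_nonneg_AE) (use X01 in \<open>auto intro: AE_I2\<close>)
    moreover have "(\<integral>x. X t x \<partial>u) \<le> (\<integral>x. 1 \<partial>u)"
      by (rule integral_mono[OF um.int_cont[OF contX]]) (use X01 prob_space.axioms(1)[OF um.prob] in \<open>auto intro: finite_measure.integrable_const\<close>)
    moreover have "(\<integral>x. (1::real) \<partial>u) = 1" using prob_space.prob_space[OF um.prob] by simp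
    ultimately show "0 \<le> w t \<and> w t \<le> 1" using mom(1)[of t] by simp
  qed
  have part2: "\<forall>t. \<forall>\<epsilon>>0. most u \<epsilon> (\<lambda>\<psi>0. \<bar>(norm (P \<nu> *v evol H t \<psi>0))\<^sup>2 - w t\<bar> \<le> 1 / sqrt (\<epsilon> * d))"
  proof (intro allI impI)
    fix t and \<epsilon> :: real assume eps: "\<epsilon> > 0"
    have mk: "{x \<in> space u. (X t x - w t)^2 \<le> 1 / (\<epsilon> * real m)} \<in> sets u \<and>
         measure u {x \<in> space u. (X t x - w t)^2 \<le> 1 / (\<epsilon> * real m)} \<ge> 1 - \<epsilon>"
      by (rule um.markov_most) (auto intro!: continuous_intros contX mom(2) eps)
    have "(\<bar>X t x - w t\<bar> \<le> 1 / sqrt (\<epsilon> * d)) \<longleftrightarrow> (X t x - w t)^2 \<le> 1 / (\<epsilon> * real m)" for x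
    proof -
      have pos: "0 < \<epsilon> * d" using eps mpos dm by simp
      have "(\<bar>X t x - w t\<bar> \<le> 1 / sqrt (\<epsilon> * d)) \<longleftrightarrow> \<bar>X t x - w t\<bar> \<le> \<bar>1 / sqrt (\<epsilon> * d)\<bar>"
        using pos by simp
      also have "\<dots> \<longleftrightarrow> (X t x - w t)^2 \<le> (1 / sqrt (\<epsilon> * d))^2" by (rule abs_le_square_iff)
      also have "(1 / sqrt (\<epsilon> * d))^2 = 1 / (\<epsilon> * real m)" using pos dm by (simp add: power_divide)
      finally show ?thesis .
    qed
    then have "{x \<in> space u. \<bar>(norm (P \<nu> *v evol H t x))\<^sup>2 - w t\<bar> \<le> 1 / sqrt (\<epsilon> * d)} =
               {x \<in> space u. (X t x - w t)^2 \<le> 1 / (\<epsilon> * real m)}"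
      by (simp add: Xeq)
    then show "most u \<epsilon> (\<lambda>\<psi>0. \<bar>(norm (P \<nu> *v evol H t \<psi>0))\<^sup>2 - w t\<bar> \<le> 1 / sqrt (\<epsilon> * d))"
      unfolding most_def using mk by simp
  qed
  have part3: "\<forall>T>0. \<forall>\<epsilon>>0. most u \<epsilon> (\<lambda>\<psi>0.
          (1 / T) * integral {0..T} (\<lambda>t. \<bar>(norm (P \<nu> *v evol H t \<psi>0))\<^sup>2 - w t\<bar>\<^sup>2)
            \<le> 1 / (\<epsilon> * d))"
  proof (intro allI impI)
    fix T :: real and \<epsilon> :: real assume T: "T > 0" and eps: "\<epsilon> > 0"
    define G where "G = (\<lambda>t x. (X t x - w t) * (X t x - w t))"
    have mcM: "mcont (\<lambda>t. P \<nu> ** U t)" unfolding U_def by (intro mcont_mult mcont_const mcont_cexpm)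
    have sepN: "sep (\<lambda>t x. (norm ((P \<nu> ** U t) *v x))^2)" by (rule sep_normsq[OF mcM])
    have contw: "continuous_on UNIV w"
    proof -
      have "mcont (\<lambda>t. P \<mu> ** cexpm (\<i> * of_real t) H ** P \<nu> ** cexpm (- \<i> * of_real t) H)"
        by (intro mcont_mult mcont_const mcont_cexpm)
      then have "continuous_on UNIV (\<lambda>t. trace (P \<mu> ** cexpm (\<i> * of_real t) H ** P \<nu> ** cexpm (- \<i> * of_real t) H))"
        by (rule mcont_trace)
      moreover have "real (cdim (subsp (P \<mu>))) \<noteq> 0" using dm mpos unfolding d_def by simp
      ultimately show ?thesis unfolding w_def wfun_def by (intro continuous_intros) auto
    qed
    have sepX: "sep X"
      by (rule sep_cong[OF sepN]) (simp add: Xeq[symmetric] evol_def U_def matrix_vector_mul_assoc)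
    have sepG: "sep G" unfolding G_def
      by (intro sep_mult sep_diff sepX sep_t contw)
    define Y where "Y = (\<lambda>x. (1 / T) * integral {0..T} (\<lambda>t. G t x))"
    have Yeq: "(1 / T) * integral {0..T} (\<lambda>t. \<bar>(norm (P \<nu> *v evol H t x))\<^sup>2 - w t\<bar>\<^sup>2) = Y x" for x
      unfolding Y_def G_def Xeq by (simp add: power2_eq_square)
    have contY: "continuous_on UNIV Y" unfolding Y_def
      by (intro continuous_intros sep_cont_int[OF sepG])
    have Ynn: "0 \<le> Y x" for x
    proof -
      have "0 \<le> integral {0..T} (\<lambda>t. G t x)"
        by (rule integral_nonneg[OF sep_int_t[OF sepG]]) (simp add: G_def)
      then show ?thesis unfolding Y_def using T by simp
    qed
    have EY: "(\<integral>x. Y x \<partial>u) \<le> 1 / (real m + 1)"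
    proof -
      have sw: "(\<lambda>t. \<integral>x. G t x \<partial>u) integrable_on {0..T} \<and>
          (\<integral>x. integral {0..T} (\<lambda>t. G t x) \<partial>u) = integral {0..T} (\<lambda>t. \<integral>x. G t x \<partial>u)"
        by (rule um.sep_swap[OF sepG])
      have "(\<integral>x. Y x \<partial>u) = (1 / T) * integral {0..T} (\<lambda>t. \<integral>x. G t x \<partial>u)"
        unfolding Y_def using sw by simp
      also have "\<dots> \<le> (1 / T) * integral {0..T} (\<lambda>t. 1 / (real m + 1))"
      proof (intro mult_left_mono integral_le)
        show "(\<lambda>t. \<integral>x. G t x \<partial>u) integrable_on {0..T}" using sw by blast
        show "(\<lambda>t. 1 / (real m + 1)) integrable_on {0..T}"
          by (rule integrable_continuous_interval) (rule continuous_on_const)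
        fix t assume "t \<in> {0..T}"
        show "(\<integral>x. G t x \<partial>u) \<le> 1 / (real m + 1)" using mom(2)[of t] unfolding G_def by (simp add: power2_eq_square)
      qed (use T in simp)
      also have "\<dots> = 1 / (real m + 1)" using T by simp
      finally show ?thesis .
    qed
    have mk: "{x \<in> space u. Y x \<le> 1 / (\<epsilon> * real m)} \<in> sets u \<and>
         measure u {x \<in> space u. Y x \<le> 1 / (\<epsilon> * real m)} \<ge> 1 - \<epsilon>"
      by (rule um.markov_most[OF contY Ynn EY eps])
    show "most u \<epsilon> (\<lambda>\<psi>0. (1 / T) * integral {0..T} (\<lambda>t. \<bar>(norm (P \<nu> *v evol H t \<psi>0))\<^sup>2 - w t\<bar>\<^sup>2)
            \<le> 1 / (\<epsilon> * d))"
      unfolding most_def Yeq dm using mk by simp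
  qed
  show ?thesis using part1 part2 part3 by blast
qed


end
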